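(* Let $g\geq 0$ and $n\geq 1$ be integers, and let $\mathcal{A}_1,\dots,\mathcal{A}_{N-1},\mathcal{A}_N=\mathcal{A}$ be weight data in $\mathcal{D}_{g,n}$, each lying in a chamber, with chambers $Ch_{\mathcal{A}_p}\ni\mathcal{A}_p$, such that the chambers up to symmetry form an ordered sequence $$[Ch_{\mathcal{A}_1}]\leq [Ch_{\mathcal{A}_2}]\leq \dots\leq [Ch_{\mathcal{A}_{N-1}}]\leq [Ch_{\mathcal{A}}].$$ Then this sequence induces a filtration by embeddings $$M^{trop}_{g,\mathcal{A}_1}\hookrightarrow M^{trop}_{g,\mathcal{A}_2}\hookrightarrow \dots\hookrightarrow M^{trop}_{g,\mathcal{A}_{N-1}}\hookrightarrow M^{trop}_{g,\mathcal{A}}.$$ The same holds with $M^{trop}_{g,\mathcal{A}_p}$ replaced throughout by the moduli space $\overline{M}^{trop}_{g,\mathcal{A}_p}$ of extended $(g,\mathcal{A}_p)$-stable tropical curves, or by the moduli space $\Delta_{g,\mathcal{A}_p}$ of $(g,\mathcal{A}_p)$-stable tropical curves of volume $1$.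
   Context: Weight data: for integers $g\ge0,n\ge1$, a weight datum is $\mathcal{A}=(a_1,\dots,a_n)$ with $a_i\in\mathbb{Q}\cap(0,1]$ and $2g-2+\sum_i a_i>0$; $\mathcal{D}_{g,n}\subset\mathbb{R}^n$ is the set of weight data. Write $\mathcal{A}\le\mathcal{B}$ if $a_i\le b_i$ for all $i$. Walls and chambers: for $S\subseteq\{1,\dots,n\}$ with $2\le|S|\le n$ if $g\ge1$ (resp. $2\le |S|\le n-2$ if $g=0$), the wall $w_S$ is the locus $\sum_{i\in S}a_i=1$ in $\mathcal{D}_{g,n}$; $W_f$ is the set of walls. The chambers (fine chamber decomposition) are the connected components of $\mathcal{D}_{g,n}\setminus\bigcup_{w\in W_f}w$; a chamber is determined by specifying, for each such $S$, whether $\sum_{i\in S}a_i<1$ or $>1$. $\mathbf{K}$ denotes the set of chambers. Partial order on $\mathbf{K}$: $Ch_1\le Ch_2$ iff for every such $S$, whenever $\sum_{i\in S}a_i>1$ for $\mathcal{A}\in Ch_1$ then $\sum_{i\in S}b_i>1$ for $\mathcal{B}\in Ch_2$ (i.e. all defining inequalities that differ have $<1$ on $Ch_1$ and $>1$ on $Ch_2$). The symmetric group $S_n$ acts on $\mathcal{D}_{g,n}$ by permuting coordinates, hence on $\mathbf{K}$; the orbit of $Ch$ is the chamber up to symmetry $[Ch]$, and $[Ch_1]\le[Ch_2]$ iff there are $Ch_1'\in[Ch_1]$, $Ch_2'\in[Ch_2]$ with $Ch_1'\le Ch_2'$. Stable graphs: a $(g,\mathcal{A})$-stable graph is a finite connected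 graph $G$ (loops and multiple edges allowed) with a vertex weight $w:V(G)\to\mathbb{Z}_{\ge0}$ and $n$ legs labelled $1,\dots,n$ attached to vertices via $m:\{1,\dots,n\}\to V(G)$, such that $b_1(G)+\sum_v w(v)=g$ and for each vertex $v$, $2w(v)-2+|v|_E+|v|_{\mathcal{A}}>0$, where $|v|_E$ is the number of edge half-edges at $v$ (loops counted twice) and $|v|_{\mathcal{A}}=\sum_{m(i)=v}a_i$. Tropical moduli spaces: a $(g,\mathcal{A})$-stable tropical curve is such a graph with edge lengths $\ell:E(G)\to\mathbb{R}_{>0}$; $M^{trop}_{g,\mathcal{A}}$ is the set of isomorphism classes, topologized as the colimit of the cones $\mathbb{R}_{\ge0}^{E(G)}$ over all $(g,\mathcal{A})$-stable graphs glued along weighted edge contractions (an edge of length $0$ is contracted) and isomorphisms. $\overline{M}^{trop}_{g,\mathcal{A}}$ is defined analogously allowing lengths in $\mathbb{R}_{>0}\cup\{\infty\}$, and $\Delta_{g,\mathcal{A}}\subset M^{trop}_{g,\mathcal{A}}$ is the subspace of curves with total edge length $1$. *)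

theory Defs
  imports "HOL-Analysis.Analysis" "HOL-Combinatorics.Permutations"
begin

text \<open>A weight datum is a function a :: nat => real; only the values a 1, ..., a n matter.\<close>

definition weight_datum :: "nat \<Rightarrow> nat \<Rightarrow> (nat \<Rightarrow> real) \<Rightarrow> bool" where
  "weight_datum g n a \<longleftrightarrow>
     (\<forall>i\<in>{1..n}. a i \<in> \<rat> \<and> 0 < a i \<and> a i \<le> 1) \<and>
     2 * real g - 2 + (\<Sum>i\<in>{1..n}. a i) > 0"

definition wall_index :: "nat \<Rightarrow> nat \<Rightarrow> nat set \<Rightarrow> bool" where
  "wall_index g n S \<longleftrightarrow> S \<subseteq> {1..n} \<and> 2 \<le> card S \<and>
     (if g \<ge> 1 then card S \<le> n else card S + 2 \<le> n)"

text \<open>A weight datum lies in a chamber iff it lies on no wall.\<close>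
definition in_chamber :: "nat \<Rightarrow> nat \<Rightarrow> (nat \<Rightarrow> real) \<Rightarrow> bool" where
  "in_chamber g n a \<longleftrightarrow> (\<forall>S. wall_index g n S \<longrightarrow> (\<Sum>i\<in>S. a i) \<noteq> 1)"

text \<open>Partial order on chambers, expressed through representatives a in Ch_1, b in Ch_2.\<close>
definition chamber_le :: "nat \<Rightarrow> nat \<Rightarrow> (nat \<Rightarrow> real) \<Rightarrow> (nat \<Rightarrow> real) \<Rightarrow> bool" where
  "chamber_le g n a b \<longleftrightarrow>
     (\<forall>S. wall_index g n S \<longrightarrow> (\<Sum>i\<in>S. a i) > 1 \<longrightarrow> (\<Sum>i\<in>S. b i) > 1)"

text \<open>[Ch_a] <= [Ch_b]: some permuted chambers are comparable. The permuted datum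
  a o sigma lies in the chamber obtained from Ch_a by the action of sigma.\<close>
definition sym_chamber_le :: "nat \<Rightarrow> nat \<Rightarrow> (nat \<Rightarrow> real) \<Rightarrow> (nat \<Rightarrow> real) \<Rightarrow> bool" where
  "sym_chamber_le g n a b \<longleftrightarrow>
     (\<exists>\<sigma> \<tau>. \<sigma> permutes {1..n} \<and> \<tau> permutes {1..n} \<and> chamber_le g n (a \<circ> \<sigma>) (b \<circ> \<tau>))"

text \<open>Vertices and edges are finite sets of natural numbers. endp e is the (ordered,
  but only up to swap relevant) pair of endpoints of edge e (a loop has equal endpoints),
  wt is the vertex weight, legv i is the vertex carrying leg i (i = 1..n).\<close>
record tgraph =
  verts :: "nat set"
  edges :: "nat set"
  endp :: "nat \<Rightarrow> nat \<times> nat"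
  wt :: "nat \<Rightarrow> nat"
  legv :: "nat \<Rightarrow> nat"

definition adj :: "tgraph \<Rightarrow> nat set \<Rightarrow> (nat \<times> nat) set" where
  "adj G S = {(u, v). \<exists>e\<in>S. endp G e = (u, v) \<or> endp G e = (v, u)}"

definition valence :: "tgraph \<Rightarrow> nat \<Rightarrow> nat" where
  "valence G v = card {e\<in>edges G. fst (endp G e) = v} + card {e\<in>edges G. snd (endp G e) = v}"

definition stable_graph :: "nat \<Rightarrow> nat \<Rightarrow> (nat \<Rightarrow> real) \<Rightarrow> tgraph \<Rightarrow> bool" where
  "stable_graph g n a G \<longleftrightarrow>
     finite (verts G) \<and> finite (edges G) \<and> verts G \<noteq> {} \<and>
     (\<forall>e\<in>edges G. fst (endp G e) \<in> verts G \<and> snd (endp G e) \<in> verts G) \<and>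
     (\<forall>i\<in>{1..n}. legv G i \<in> verts G) \<and>
     (\<forall>u\<in>verts G. \<forall>v\<in>verts G. (u, v) \<in> (adj G (edges G))\<^sup>*) \<and>
     int (card (edges G)) - int (card (verts G)) + 1 + (\<Sum>v\<in>verts G. int (wt G v)) = int g \<and>
     (\<forall>v\<in>verts G. 2 * real (wt G v) - 2 + real (valence G v)
                    + (\<Sum>i\<in>{i\<in>{1..n}. legv G i = v}. a i) > 0)"

text \<open>Tropical curves: a graph with edge lengths (extended reals; only values on edges matter).\<close>
type_synonym tcurve = "tgraph \<times> (nat \<Rightarrow> ereal)"

definition curve_iso :: "nat \<Rightarrow> tcurve \<Rightarrow> tcurve \<Rightarrow> bool" where
  "curve_iso n C D \<longleftrightarrow> (case C of (G, l) \<Rightarrow> case D of (H, m) \<Rightarrow>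
     (\<exists>f h. bij_betw f (verts G) (verts H) \<and> bij_betw h (edges G) (edges H) \<and>
        (\<forall>e\<in>edges G. endp H (h e) = map_prod f f (endp G e) \<or>
                      endp H (h e) = prod.swap (map_prod f f (endp G e))) \<and>
        (\<forall>v\<in>verts G. wt H (f v) = wt G v) \<and>
        (\<forall>i\<in>{1..n}. legv H i = f (legv G i)) \<and>
        (\<forall>e\<in>edges G. m (h e) = l e)))"

definition iso_class :: "nat \<Rightarrow> tcurve \<Rightarrow> tcurve set" where
  "iso_class n C = {D. curve_iso n C D}"

text \<open>(g,A)-stable tropical curves; fin = True: lengths in (0,infinity),
  fin = False: lengths in (0,infinity] (extended curves).\<close>
definition stable_curve :: "bool \<Rightarrow> nat \<Rightarrow> nat \<Rightarrow> (nat \<Rightarrow> real) \<Rightarrow> tcurve \<Rightarrow> bool" where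
  "stable_curve fin g n a C \<longleftrightarrow> stable_graph g n a (fst C) \<and>
     (\<forall>e\<in>edges (fst C). 0 < snd C e \<and> (fin \<longrightarrow> snd C e < \<infinity>))"

definition moduli_points :: "bool \<Rightarrow> nat \<Rightarrow> nat \<Rightarrow> (nat \<Rightarrow> real) \<Rightarrow> tcurve set set" where
  "moduli_points fin g n a = {iso_class n C | C. stable_curve fin g n a C}"

text \<open>Contraction of the edge set S: vertices connected through S are identified
  (represented by the least vertex of the class); the new vertex weight is the sum of
  the weights plus the first Betti number of the contracted connected subgraph.\<close>
definition vclass :: "tgraph \<Rightarrow> nat set \<Rightarrow> nat \<Rightarrow> nat set" where
  "vclass G S v = {u\<in>verts G. (v, u) \<in> (adj G S)\<^sup>*}"

definition vrep :: "tgraph \<Rightarrow> nat set \<Rightarrow> nat \<Rightarrow> nat" where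
  "vrep G S v = Min (vclass G S v)"

definition contract :: "tgraph \<Rightarrow> nat set \<Rightarrow> tgraph" where
  "contract G S =
     \<lparr> verts = vrep G S ` verts G,
       edges = edges G - S,
       endp = (\<lambda>e. map_prod (vrep G S) (vrep G S) (endp G e)),
       wt = (\<lambda>r. (\<Sum>u\<in>vclass G S r. wt G u)
                 + (card {e\<in>S. fst (endp G e) \<in> vclass G S r} + 1 - card (vclass G S r))),
       legv = (\<lambda>i. vrep G S (legv G i)) \<rparr>"

text \<open>The cone R_{\<ge>0}^{E(G)} (resp. (R_{\<ge>0} \<union> {\<infinity>})^{E(G)}), as a subspace of ereal^nat
  (coordinates outside E(G) fixed to 0).\<close>
definition cone_set :: "bool \<Rightarrow> nat set \<Rightarrow> (nat \<Rightarrow> ereal) set" where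
  "cone_set fin E = {l. (\<forall>e\<in>E. 0 \<le> l e \<and> (fin \<longrightarrow> l e < \<infinity>)) \<and> (\<forall>e. e \<notin> E \<longrightarrow> l e = 0)}"

definition cone_top :: "bool \<Rightarrow> nat set \<Rightarrow> (nat \<Rightarrow> ereal) topology" where
  "cone_top fin E = subtopology (product_topology (\<lambda>_. euclidean) UNIV) (cone_set fin E)"

definition cone_map :: "nat \<Rightarrow> tgraph \<Rightarrow> (nat \<Rightarrow> ereal) \<Rightarrow> tcurve set" where
  "cone_map n G l = iso_class n (contract G {e\<in>edges G. l e = 0}, l)"

definition final_open :: "'b set \<Rightarrow> ('i \<Rightarrow> 'a topology) \<Rightarrow> ('i \<Rightarrow> 'a \<Rightarrow> 'b) \<Rightarrow> 'i set \<Rightarrow> 'b set \<Rightarrow> bool" where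
  "final_open X T f I U \<longleftrightarrow> U \<subseteq> X \<and> (\<forall>i\<in>I. openin (T i) {x \<in> topspace (T i). f i x \<in> U})"

lemma istopology_final_open: "istopology (final_open X T f I)"
  unfolding istopology_def final_open_def
proof (intro conjI allI impI)
  fix S U assume S: "S \<subseteq> X \<and> (\<forall>i\<in>I. openin (T i) {x \<in> topspace (T i). f i x \<in> S})"
    and U: "U \<subseteq> X \<and> (\<forall>i\<in>I. openin (T i) {x \<in> topspace (T i). f i x \<in> U})"
  show "S \<inter> U \<subseteq> X" using S by blast
  show "\<forall>i\<in>I. openin (T i) {x \<in> topspace (T i). f i x \<in> S \<inter> U}"
  proof
    fix i assume "i \<in> I"
    then have "openin (T i) ({x \<in> topspace (T i). f i x \<in> S} \<inter> {x \<in> topspace (T i). f i x \<in> U})"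
      using S U by blast
    moreover have "{x \<in> topspace (T i). f i x \<in> S} \<inter> {x \<in> topspace (T i). f i x \<in> U}
                   = {x \<in> topspace (T i). f i x \<in> S \<inter> U}" by blast
    ultimately show "openin (T i) {x \<in> topspace (T i). f i x \<in> S \<inter> U}" by simp
  qed
next
  fix K assume K: "\<forall>U\<in>K. U \<subseteq> X \<and> (\<forall>i\<in>I. openin (T i) {x \<in> topspace (T i). f i x \<in> U})"
  show "\<Union> K \<subseteq> X" using K by blast
  show "\<forall>i\<in>I. openin (T i) {x \<in> topspace (T i). f i x \<in> \<Union> K}"
  proof
    fix i assume "i \<in> I"
    then have "openin (T i) (\<Union>U\<in>K. {x \<in> topspace (T i). f i x \<in> U})"
      using K by (intro openin_Union) auto
    moreover have "(\<Union>U\<in>K. {x \<in> topspace (T i). f i x \<in> U}) = {x \<in> topspace (T i). f i x \<in> \<Union> K}"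
      by blast
    ultimately show "openin (T i) {x \<in> topspace (T i). f i x \<in> \<Union> K}" by simp
  qed
qed

definition final_topology :: "'b set \<Rightarrow> ('i \<Rightarrow> 'a topology) \<Rightarrow> ('i \<Rightarrow> 'a \<Rightarrow> 'b) \<Rightarrow> 'i set \<Rightarrow> 'b topology" where
  "final_topology X T f I = topology (final_open X T f I)"

definition moduli_top :: "bool \<Rightarrow> nat \<Rightarrow> nat \<Rightarrow> (nat \<Rightarrow> real) \<Rightarrow> tcurve set topology" where
  "moduli_top fin g n a =
     final_topology (moduli_points fin g n a) (\<lambda>G. cone_top fin (edges G)) (cone_map n)
       {G. stable_graph g n a G}"

definition Mtrop :: "nat \<Rightarrow> nat \<Rightarrow> (nat \<Rightarrow> real) \<Rightarrow> tcurve set topology" where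
  "Mtrop g n a = moduli_top True g n a"

definition Mtrop_bar :: "nat \<Rightarrow> nat \<Rightarrow> (nat \<Rightarrow> real) \<Rightarrow> tcurve set topology" where
  "Mtrop_bar g n a = moduli_top False g n a"

definition total_length :: "tcurve \<Rightarrow> ereal" where
  "total_length C = (\<Sum>e\<in>edges (fst C). snd C e)"

definition Delta_trop :: "nat \<Rightarrow> nat \<Rightarrow> (nat \<Rightarrow> real) \<Rightarrow> tcurve set topology" where
  "Delta_trop g n a = subtopology (Mtrop g n a)
     {c \<in> moduli_points True g n a. \<exists>C\<in>c. total_length C = 1}"

definition relabel :: "(nat \<Rightarrow> nat) \<Rightarrow> tcurve \<Rightarrow> tcurve" where
  "relabel \<rho> C = (fst C\<lparr>legv := legv (fst C) \<circ> \<rho>\<rparr>, snd C)"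

definition relabel_map :: "nat \<Rightarrow> (nat \<Rightarrow> nat) \<Rightarrow> tcurve set \<Rightarrow> tcurve set" where
  "relabel_map n \<rho> c = iso_class n (relabel \<rho> (SOME C. C \<in> c))"

end

theory Submission
  imports Defs
begin


definition wfg :: "tgraph \<Rightarrow> bool" where
  "wfg G \<longleftrightarrow> finite (verts G) \<and> finite (edges G) \<and>
     (\<forall>e\<in>edges G. fst (endp G e) \<in> verts G \<and> snd (endp G e) \<in> verts G)"

lemma adj_sym: "(u, v) \<in> adj G S \<Longrightarrow> (v, u) \<in> adj G S"
  unfolding adj_def by auto

lemma adj_rtrancl_sym: "(u, v) \<in> (adj G S)\<^sup>* \<Longrightarrow> (v, u) \<in> (adj G S)\<^sup>*"
proof (induction rule: rtrancl_induct)
  case base then show ?case by simp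
next
  case (step y z) then show ?case
    by (meson adj_sym converse_rtrancl_into_rtrancl)
qed

lemma adj_mono: "S \<subseteq> T \<Longrightarrow> adj G S \<subseteq> adj G T"
  unfolding adj_def by auto

lemma adj_rtrancl_mono: "S \<subseteq> T \<Longrightarrow> (u, v) \<in> (adj G S)\<^sup>* \<Longrightarrow> (u, v) \<in> (adj G T)\<^sup>*"
  using rtrancl_mono[OF adj_mono] by blast

lemma adj_verts: "wfg G \<Longrightarrow> S \<subseteq> edges G \<Longrightarrow> (u, v) \<in> adj G S \<Longrightarrow> u \<in> verts G \<and> v \<in> verts G"
  unfolding adj_def wfg_def by fastforce

lemma vclass_refl: "v \<in> verts G \<Longrightarrow> v \<in> vclass G S v"
  unfolding vclass_def by auto

lemma vclass_sub: "vclass G S v \<subseteq> verts G"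
  unfolding vclass_def by auto

lemma finite_vclass: "wfg G \<Longrightarrow> finite (vclass G S v)"
  using vclass_sub wfg_def finite_subset by metis

lemma vclass_eq: assumes h: "(u, v) \<in> (adj G S)\<^sup>*" shows "vclass G S u = vclass G S v"
proof -
  have h2: "(v, u) \<in> (adj G S)\<^sup>*" using adj_rtrancl_sym[OF h] .
  show ?thesis unfolding vclass_def
    using rtrancl_trans[OF h] rtrancl_trans[OF h2] by blast
qed

lemma vrep_in: "wfg G \<Longrightarrow> v \<in> verts G \<Longrightarrow> vrep G S v \<in> vclass G S v"
  unfolding vrep_def by (rule Min_in) (auto simp: finite_vclass dest: vclass_refl)

lemma vrep_verts: "wfg G \<Longrightarrow> v \<in> verts G \<Longrightarrow> vrep G S v \<in> verts G"
  using vrep_in vclass_sub by blast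

lemma vrep_rel: "wfg G \<Longrightarrow> v \<in> verts G \<Longrightarrow> (v, vrep G S v) \<in> (adj G S)\<^sup>*"
  using vrep_in unfolding vclass_def by blast

lemma vrep_eq_iff: "wfg G \<Longrightarrow> u \<in> verts G \<Longrightarrow> v \<in> verts G \<Longrightarrow>
    vrep G S u = vrep G S v \<longleftrightarrow> (u, v) \<in> (adj G S)\<^sup>*"
proof
  assume w: "wfg G" and u: "u \<in> verts G" and v: "v \<in> verts G" and eq: "vrep G S u = vrep G S v"
  have "(u, vrep G S u) \<in> (adj G S)\<^sup>*" "(v, vrep G S v) \<in> (adj G S)\<^sup>*"
    using vrep_rel w u v by auto
  then show "(u, v) \<in> (adj G S)\<^sup>*" using eq adj_rtrancl_sym[of v "vrep G S v"] rtrancl_trans[of u "vrep G S u"] by simp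
next
  assume "(u, v) \<in> (adj G S)\<^sup>*"
  then show "vrep G S u = vrep G S v" unfolding vrep_def using vclass_eq by simp
qed

lemma vclass_vrep: "wfg G \<Longrightarrow> v \<in> verts G \<Longrightarrow> vclass G S (vrep G S v) = vclass G S v"
  using vclass_eq[OF vrep_rel] by simp

lemma vclass_mem_iff: "u \<in> vclass G S v \<longleftrightarrow> u \<in> verts G \<and> (v, u) \<in> (adj G S)\<^sup>*"
  unfolding vclass_def by auto

lemma vrep_eq_class: "wfg G \<Longrightarrow> u \<in> verts G \<Longrightarrow> v \<in> verts G \<Longrightarrow>
    vrep G S u = vrep G S v \<longleftrightarrow> u \<in> vclass G S v"
  using vrep_eq_iff[of G u v S] vclass_mem_iff[of u G S v] adj_rtrancl_sym[of u v] adj_rtrancl_sym[of v u] by blast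

lemma tree_bound:
  assumes w: "wfg G" and S: "S \<subseteq> edges G"
  shows "card (vclass G S v) \<le> card {e\<in>S. fst (endp G e) \<in> vclass G S v} + 1"
proof (cases "v \<in> verts G")
  case False
  have "vclass G S v = {}"
  proof -
    { fix x assume x: "x \<in> verts G" "(v, x) \<in> (adj G S)\<^sup>*"
      then have False using False
        by (metis adj_verts[OF w S] converse_rtranclE) }
    then show ?thesis unfolding vclass_def by auto
  qed
  then show ?thesis by simp
next
  case True
  define R where "R = adj G S"
  define K where "K = vclass G S v"
  define d where "d u = (LEAST k. (v, u) \<in> R ^^ k)" for u
  have fin: "finite K" unfolding K_def using finite_vclass w by blast
  have finS: "finite S" using S w wfg_def finite_subset by metis
  have dk: "(v, u) \<in> R ^^ d u" if "u \<in> K" for u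
  proof -
    from that have "(v, u) \<in> R\<^sup>*" unfolding K_def vclass_def R_def by auto
    then obtain k where "(v, u) \<in> R ^^ k" using rtrancl_power by blast
    then show ?thesis unfolding d_def by (rule LeastI)
  qed
  have dle: "d u \<le> k" if "(v, u) \<in> R ^^ k" for u k
    unfolding d_def using that by (rule Least_le)
  have ex: "\<exists>e w. e \<in> S \<and> (v, w) \<in> R ^^ (d u - 1) \<and> (endp G e = (w, u) \<or> endp G e = (u, w)) \<and> d u \<ge> 1"
    if "u \<in> K - {v}" for u
  proof -
    have h: "(v, u) \<in> R ^^ d u" using dk that by blast
    have "d u \<noteq> 0" using h that by (metis DiffD2 relpow_0_E singletonI)
    then obtain m where m: "d u = Suc m" using not0_implies_Suc by blast
    with h obtain w where "(v, w) \<in> R ^^ m" "(w, u) \<in> R" by (metis relpow_Suc_E)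
    then show ?thesis unfolding R_def adj_def using m by auto
  qed
  define E where "E u = (SOME e. \<exists>w. e \<in> S \<and> (v, w) \<in> R ^^ (d u - 1) \<and> (endp G e = (w, u) \<or> endp G e = (u, w)))" for u
  have Eprop: "\<exists>w. E u \<in> S \<and> (v, w) \<in> R ^^ (d u - 1) \<and> (endp G (E u) = (w, u) \<or> endp G (E u) = (u, w))"
    if "u \<in> K - {v}" for u
    unfolding E_def using ex[OF that] by (smt (verit) someI_ex)
  have dpos: "d u \<ge> 1" if "u \<in> K - {v}" for u using ex[OF that] by blast
  have inj: "inj_on E (K - {v})"
  proof (rule inj_onI)
    fix u u' assume u: "u \<in> K - {v}" and u': "u' \<in> K - {v}" and eq: "E u = E u'"
    show "u = u'"
    proof (rule ccontr)
      assume ne: "u \<noteq> u'"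
      obtain w where w1: "(v, w) \<in> R ^^ (d u - 1)" and e1: "endp G (E u) = (w, u) \<or> endp G (E u) = (u, w)"
        using Eprop[OF u] by blast
      obtain w' where w2: "(v, w') \<in> R ^^ (d u' - 1)" and e2: "endp G (E u') = (w', u') \<or> endp G (E u') = (u', w')"
        using Eprop[OF u'] by blast
      have "w = u' \<and> w' = u" using e1 e2 eq ne by auto
      then have "d u' \<le> d u - 1" "d u \<le> d u' - 1" using dle w1 w2 by auto
      then show False using dpos[OF u] dpos[OF u'] by linarith
    qed
  qed
  have img: "E ` (K - {v}) \<subseteq> {e\<in>S. fst (endp G e) \<in> K}"
  proof
    fix x assume "x \<in> E ` (K - {v})"
    then obtain u where u: "u \<in> K - {v}" and x: "x = E u" by blast
    obtain w where xS: "x \<in> S" and w1: "(v, w) \<in> R ^^ (d u - 1)" and e1: "endp G x = (w, u) \<or> endp G x = (u, w)"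
      using Eprop[OF u] x by blast
    have "w \<in> verts G" using e1 xS S w unfolding wfg_def by (metis fst_conv snd_conv subsetD)
    moreover have "(v, w) \<in> R\<^sup>*" using w1 relpow_imp_rtrancl by blast
    ultimately have "w \<in> K" unfolding K_def vclass_def R_def by blast
    then show "x \<in> {e\<in>S. fst (endp G e) \<in> K}" using e1 xS u by auto
  qed
  have "card (K - {v}) \<le> card {e\<in>S. fst (endp G e) \<in> K}"
    using card_inj_on_le[OF inj img] finS by auto
  moreover have "card K \<le> card (K - {v}) + 1" using fin
    by (cases "v \<in> K") (auto simp: card_Diff_singleton)
  ultimately show ?thesis unfolding K_def by linarith
qed



definition wfl :: "nat \<Rightarrow> tgraph \<Rightarrow> bool" where
  "wfl n G \<longleftrightarrow> wfg G \<and> (\<forall>i\<in>{1..n}. legv G i \<in> verts G)"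

lemma stable_wfl: "stable_graph g n a G \<Longrightarrow> wfl n G"
  unfolding stable_graph_def wfl_def wfg_def by auto

lemma iso_refl: "curve_iso n C C"
proof -
  obtain G l where C: "C = (G, l)" by (cases C)
  show ?thesis unfolding C curve_iso_def prod.case
    by (rule exI[of _ id], rule exI[of _ id]) (simp add: map_prod.id)
qed

lemma iso_trans:
  assumes "curve_iso n C D" "curve_iso n D E" shows "curve_iso n C E"
proof -
  obtain G l where C: "C = (G, l)" by (cases C)
  obtain H m where D: "D = (H, m)" by (cases D)
  obtain K k where E: "E = (K, k)" by (cases E)
  obtain f h where f: "bij_betw f (verts G) (verts H)" and h: "bij_betw h (edges G) (edges H)"
    and en: "\<forall>e\<in>edges G. endp H (h e) = map_prod f f (endp G e) \<or> endp H (h e) = prod.swap (map_prod f f (endp G e))"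
    and wt: "\<forall>v\<in>verts G. wt H (f v) = wt G v" and lg: "\<forall>i\<in>{1..n}. legv H i = f (legv G i)"
    and ln: "\<forall>e\<in>edges G. m (h e) = l e"
    using assms(1) unfolding C D curve_iso_def by auto
  obtain f2 h2 where f2: "bij_betw f2 (verts H) (verts K)" and h2: "bij_betw h2 (edges H) (edges K)"
    and en2: "\<forall>e\<in>edges H. endp K (h2 e) = map_prod f2 f2 (endp H e) \<or> endp K (h2 e) = prod.swap (map_prod f2 f2 (endp H e))"
    and wt2: "\<forall>v\<in>verts H. wt K (f2 v) = wt H v" and lg2: "\<forall>i\<in>{1..n}. legv K i = f2 (legv H i)"
    and ln2: "\<forall>e\<in>edges H. k (h2 e) = m e"
    using assms(2) unfolding E D curve_iso_def by auto
  have hE: "h e \<in> edges H" if "e \<in> edges G" for e using h that bij_betwE by blast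
  have fV: "f v \<in> verts H" if "v \<in> verts G" for v using f that bij_betwE by blast
  show ?thesis unfolding C E curve_iso_def prod.case
  proof (rule exI[of _ "f2 \<circ> f"], rule exI[of _ "h2 \<circ> h"], intro conjI ballI)
    show "bij_betw (f2 \<circ> f) (verts G) (verts K)" using f f2 bij_betw_trans by blast
    show "bij_betw (h2 \<circ> h) (edges G) (edges K)" using h h2 bij_betw_trans by blast
  next
    fix e assume e: "e \<in> edges G"
    obtain x y where xy: "endp G e = (x, y)" by (cases "endp G e")
    show "endp K ((h2 \<circ> h) e) = map_prod (f2 \<circ> f) (f2 \<circ> f) (endp G e) \<or>
          endp K ((h2 \<circ> h) e) = prod.swap (map_prod (f2 \<circ> f) (f2 \<circ> f) (endp G e))"
      using en[rule_format, OF e] en2[rule_format, OF hE[OF e]] xy by auto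
    show "k ((h2 \<circ> h) e) = l e" using ln2 ln hE e by simp
  next
    fix v assume "v \<in> verts G" then show "wt K ((f2 \<circ> f) v) = wt G v" using wt wt2 fV by simp
  next
    fix i assume "i \<in> {1..n}" then show "legv K i = (f2 \<circ> f) (legv G i)" using lg lg2 by simp
  qed
qed

lemma iso_sym:
  assumes "curve_iso n C D" "wfl n (fst C)" shows "curve_iso n D C"
proof -
  obtain G l where C: "C = (G, l)" by (cases C)
  obtain H m where D: "D = (H, m)" by (cases D)
  obtain f h where f: "bij_betw f (verts G) (verts H)" and h: "bij_betw h (edges G) (edges H)"
    and en: "\<forall>e\<in>edges G. endp H (h e) = map_prod f f (endp G e) \<or> endp H (h e) = prod.swap (map_prod f f (endp G e))"
    and wt: "\<forall>v\<in>verts G. wt H (f v) = wt G v" and lg: "\<forall>i\<in>{1..n}. legv H i = f (legv G i)"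
    and ln: "\<forall>e\<in>edges G. m (h e) = l e"
    using assms(1) unfolding C D curve_iso_def by auto
  have w: "wfl n G" using assms(2) C by simp
  define f' where "f' = inv_into (verts G) f"
  define h' where "h' = inv_into (edges G) h"
  have f': "bij_betw f' (verts H) (verts G)" unfolding f'_def using f by (rule bij_betw_inv_into)
  have h': "bij_betw h' (edges H) (edges G)" unfolding h'_def using h by (rule bij_betw_inv_into)
  have ff: "f' (f v) = v" if "v \<in> verts G" for v
    unfolding f'_def using f that bij_betw_inv_into_left by metis
  have hh: "h (h' e) = e" if "e \<in> edges H" for e
    unfolding h'_def using h that bij_betw_inv_into_right by metis
  have hE: "h' e \<in> edges G" if "e \<in> edges H" for e using h' that bij_betwE by blast
  have ff2: "f (f' v) = v" if "v \<in> verts H" for v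
    unfolding f'_def using f that bij_betw_inv_into_right by metis
  have fV: "f' v \<in> verts G" if "v \<in> verts H" for v using f' that bij_betwE by blast
  show ?thesis unfolding C D curve_iso_def prod.case
  proof (rule exI[of _ f'], rule exI[of _ h'], intro conjI ballI f' h')
    fix e assume e: "e \<in> edges H"
    obtain x y where xy: "endp G (h' e) = (x, y)" by (cases "endp G (h' e)")
    have xyV: "x \<in> verts G" "y \<in> verts G" using w hE[OF e] xy unfolding wfl_def wfg_def by force+
    have "endp H e = map_prod f f (endp G (h' e)) \<or> endp H e = prod.swap (map_prod f f (endp G (h' e)))"
      using en[rule_format, OF hE[OF e]] unfolding hh[OF e] .
    then show "endp G (h' e) = map_prod f' f' (endp H e) \<or> endp G (h' e) = prod.swap (map_prod f' f' (endp H e))"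
      using xy ff[OF xyV(1)] ff[OF xyV(2)] by auto
    show "l (h' e) = m e" using ln[rule_format, OF hE[OF e]] hh[OF e] by simp
  next
    fix v assume v: "v \<in> verts H" then show "wt G (f' v) = wt H v" using wt[rule_format, OF fV[OF v]] ff2[OF v] by simp
  next
    fix i assume i: "i \<in> {1..n}"
    then have "legv G i \<in> verts G" using w unfolding wfl_def by auto
    then show "legv G i = f' (legv H i)" using lg i ff by simp
  qed
qed

lemma card_filter_sum: "finite A \<Longrightarrow> card {x\<in>A. P x} = (\<Sum>x\<in>A. if P x then 1 else 0)"
  by (simp add: sum.inter_filter[symmetric])

lemma valence_sum: "finite (edges G) \<Longrightarrow> valence G v =
   (\<Sum>e\<in>edges G. (if fst (endp G e) = v then 1 else 0) + (if snd (endp G e) = v then 1 else 0))"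
  unfolding valence_def by (simp add: card_filter_sum sum.distrib)

lemma iso_stable:
  assumes "curve_iso n (G, l) (H, m)" "stable_graph g n a G" shows "stable_graph g n a H"
proof -
  obtain f h where f: "bij_betw f (verts G) (verts H)" and h: "bij_betw h (edges G) (edges H)"
    and en: "\<forall>e\<in>edges G. endp H (h e) = map_prod f f (endp G e) \<or> endp H (h e) = prod.swap (map_prod f f (endp G e))"
    and wt: "\<forall>v\<in>verts G. wt H (f v) = wt G v" and lg: "\<forall>i\<in>{1..n}. legv H i = f (legv G i)"
    using assms(1) unfolding curve_iso_def by auto
  have s: "finite (verts G)" "finite (edges G)" "verts G \<noteq> {}"
     "\<forall>e\<in>edges G. fst (endp G e) \<in> verts G \<and> snd (endp G e) \<in> verts G"
     "\<forall>i\<in>{1..n}. legv G i \<in> verts G"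
     "\<forall>u\<in>verts G. \<forall>v\<in>verts G. (u, v) \<in> (adj G (edges G))\<^sup>*"
     "int (card (edges G)) - int (card (verts G)) + 1 + (\<Sum>v\<in>verts G. int (wt G v)) = int g"
     "\<forall>v\<in>verts G. 2 * real (wt G v) - 2 + real (valence G v) + (\<Sum>i\<in>{i\<in>{1..n}. legv G i = v}. a i) > 0"
    using assms(2) unfolding stable_graph_def by auto
  have VH: "verts H = f ` verts G" using f bij_betw_imp_surj_on by metis
  have EH: "edges H = h ` edges G" using h bij_betw_imp_surj_on by metis
  have finj: "inj_on f (verts G)" using f bij_betw_imp_inj_on by blast
  have hE: "h e \<in> edges H" if "e \<in> edges G" for e using h that bij_betwE by blast
  have endpH: "fst (endp H (h e)) \<in> f ` {fst (endp G e), snd (endp G e)} \<and>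
               snd (endp H (h e)) \<in> f ` {fst (endp G e), snd (endp G e)}" if "e \<in> edges G" for e
    using en[rule_format, OF that] by (cases "endp G e") auto
  have adjH: "(f x, f y) \<in> adj H (edges H)" if "(x, y) \<in> adj G (edges G)" for x y
  proof -
    from that obtain e where e: "e \<in> edges G" "endp G e = (x, y) \<or> endp G e = (y, x)"
      unfolding adj_def by auto
    then show ?thesis using en[rule_format, OF e(1)] hE[OF e(1)] unfolding adj_def by auto
  qed
  have conn: "(f x, f y) \<in> (adj H (edges H))\<^sup>*" if "(x, y) \<in> (adj G (edges G))\<^sup>*" for x y
    using that
  proof (induction rule: rtrancl_induct)
    case base then show ?case by simp
  next
    case (step y z) from step.IH adjH[OF step.hyps(2)] show ?case by (rule rtrancl_into_rtrancl)
  qed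
  have val: "valence H (f v) = valence G v" if v: "v \<in> verts G" for v
  proof -
    have fe: "finite (edges H)" using s(2) EH by simp
    have "valence H (f v) = (\<Sum>e\<in>edges H. (if fst (endp H e) = f v then 1 else 0) + (if snd (endp H e) = f v then 1 else 0))"
      using valence_sum fe by blast
    also have "\<dots> = (\<Sum>e\<in>edges G. (if fst (endp H (h e)) = f v then 1 else 0) + (if snd (endp H (h e)) = f v then 1 else 0))"
      using sum.reindex_bij_betw[OF h, symmetric] by simp
    also have "\<dots> = (\<Sum>e\<in>edges G. (if fst (endp G e) = v then 1 else 0) + (if snd (endp G e) = v then 1 else 0))"
    proof (rule sum.cong[OF refl])
      fix e assume e: "e \<in> edges G"
      obtain x y where xy: "endp G e = (x, y)" by (cases "endp G e")
      have xyV: "x \<in> verts G" "y \<in> verts G" using s(4) e xy by force+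
      have "(f x = f v) = (x = v)" "(f y = f v) = (y = v)" using inj_on_eq_iff[OF finj xyV(1) v] inj_on_eq_iff[OF finj xyV(2) v] by auto
      then show "(if fst (endp H (h e)) = f v then 1 else 0) + (if snd (endp H (h e)) = f v then 1 else 0) =
         (if fst (endp G e) = v then 1 else (0::nat)) + (if snd (endp G e) = v then 1 else 0)"
        using en[rule_format, OF e] xy by auto
    qed
    also have "\<dots> = valence G v" by (rule valence_sum[OF s(2), symmetric])
    finally show ?thesis .
  qed
  have legs: "{i\<in>{1..n}. legv H i = f v} = {i\<in>{1..n}. legv G i = v}" if v: "v \<in> verts G" for v
    using lg s(5) inj_on_eq_iff[OF finj _ v] by auto
  show ?thesis unfolding stable_graph_def
  proof (intro conjI ballI)
    show "finite (verts H)" using VH s(1) by simp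
    show "finite (edges H)" using EH s(2) by simp
    show "verts H \<noteq> {}" using VH s(3) by simp
  next
    fix e assume "e \<in> edges H"
    then obtain e0 where e0: "e0 \<in> edges G" "e = h e0" using EH by blast
    have "f ` {fst (endp G e0), snd (endp G e0)} \<subseteq> verts H" using s(4) e0 VH by auto
    then show "fst (endp H e) \<in> verts H" "snd (endp H e) \<in> verts H" using endpH[OF e0(1)] e0 by auto
  next
    fix i assume "i \<in> {1..n}" then show "legv H i \<in> verts H" using lg s(5) VH by auto
  next
    fix u v assume "u \<in> verts H" "v \<in> verts H"
    then obtain u0 v0 where "u0 \<in> verts G" "v0 \<in> verts G" "u = f u0" "v = f v0" using VH by blast
    then show "(u, v) \<in> (adj H (edges H))\<^sup>*" using conn s(6) by blast
  next
    have "card (edges H) = card (edges G)" using bij_betw_same_card[OF h] by simp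
    moreover have "card (verts H) = card (verts G)" using bij_betw_same_card[OF f] by simp
    moreover have "(\<Sum>v\<in>verts H. int (wt H v)) = (\<Sum>v\<in>verts G. int (wt G v))"
      using sum.reindex_bij_betw[OF f, of "\<lambda>v. int (wt H v)"] wt by simp
    ultimately show "int (card (edges H)) - int (card (verts H)) + 1 + (\<Sum>v\<in>verts H. int (wt H v)) = int g"
      using s(7) by simp
  next
    fix v' assume "v' \<in> verts H"
    then obtain v where v: "v \<in> verts G" "v' = f v" using VH by blast
    show "2 * real (wt H v') - 2 + real (valence H v') + (\<Sum>i\<in>{i\<in>{1..n}. legv H i = v'}. a i) > 0"
      using s(8) v val legs wt by simp
  qed
qed

lemma iso_class_eq:
  assumes "curve_iso n C D" "wfl n (fst C)" shows "iso_class n C = iso_class n D"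
  unfolding iso_class_def using iso_sym[OF assms] assms(1) iso_trans by blast

lemma iso_class_mem: "C \<in> iso_class n C"
  unfolding iso_class_def using iso_refl by blast

lemma iso_class_eqD: "iso_class n C = iso_class n D \<Longrightarrow> curve_iso n C D"
  using iso_class_mem unfolding iso_class_def by blast



lemma relabel_pair: "relabel \<rho> (G, l) = (G\<lparr>legv := legv G \<circ> \<rho>\<rparr>, l)"
  unfolding relabel_def by simp

lemma iso_relabel:
  assumes r: "\<forall>i\<in>{1..n}. \<rho> i \<in> {1..n}" and iso: "curve_iso n C D"
  shows "curve_iso n (relabel \<rho> C) (relabel \<rho> D)"
proof -
  obtain G l where C: "C = (G, l)" by (cases C)
  obtain H m where D: "D = (H, m)" by (cases D)
  obtain f h where f: "bij_betw f (verts G) (verts H)" and h: "bij_betw h (edges G) (edges H)"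
    and en: "\<forall>e\<in>edges G. endp H (h e) = map_prod f f (endp G e) \<or> endp H (h e) = prod.swap (map_prod f f (endp G e))"
    and wt: "\<forall>v\<in>verts G. wt H (f v) = wt G v" and lg: "\<forall>i\<in>{1..n}. legv H i = f (legv G i)"
    and ln: "\<forall>e\<in>edges G. m (h e) = l e"
    using iso unfolding C D curve_iso_def by auto
  have lg2: "\<forall>i\<in>{1..n}. (legv H \<circ> \<rho>) i = f ((legv G \<circ> \<rho>) i)"
  proof
    fix i assume "i \<in> {1..n}"
    then have "\<rho> i \<in> {1..n}" using r by blast
    then show "(legv H \<circ> \<rho>) i = f ((legv G \<circ> \<rho>) i)" using lg by simp
  qed
  show ?thesis unfolding C D relabel_pair curve_iso_def prod.case
    apply (rule exI[of _ f], rule exI[of _ h])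
    apply (intro conjI)
    using f h en wt lg2 ln by auto
qed

lemma wfl_relabel: "wfl n G \<Longrightarrow> \<forall>i\<in>{1..n}. \<rho> i \<in> {1..n} \<Longrightarrow> wfl n (G\<lparr>legv := legv G \<circ> \<rho>\<rparr>)"
  unfolding wfl_def wfg_def by simp

lemma relabel_map_iso:
  assumes w: "wfl n (fst C)" and r: "\<forall>i\<in>{1..n}. \<rho> i \<in> {1..n}"
  shows "relabel_map n \<rho> (iso_class n C) = iso_class n (relabel \<rho> C)"
proof -
  define C' where "C' = (SOME C'. C' \<in> iso_class n C)"
  have "C' \<in> iso_class n C" unfolding C'_def using iso_class_mem by (rule someI)
  then have "curve_iso n C C'" unfolding iso_class_def by simp
  then have i: "curve_iso n (relabel \<rho> C) (relabel \<rho> C')" by (rule iso_relabel[OF r])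
  have "wfl n (fst (relabel \<rho> C))" unfolding relabel_def using wfl_relabel w r by simp
  then have "iso_class n (relabel \<rho> C) = iso_class n (relabel \<rho> C')" by (rule iso_class_eq[OF i])
  then show ?thesis unfolding relabel_map_def C'_def by simp
qed

lemma relabel_relabel: "relabel \<rho>' (relabel \<rho> C) = relabel (\<rho> \<circ> \<rho>') C"
  unfolding relabel_def by (simp add: o_def)

lemma relabel_id: "relabel id C = C"
  unfolding relabel_def by (simp add: o_def)

lemma permutes_maps: assumes p: "\<rho> permutes {1..n}" shows "\<forall>i\<in>{1..n}. \<rho> i \<in> {1..(n::nat)}"
proof
  fix i assume i: "i \<in> {1..n}"
  show "\<rho> i \<in> {1..n}" using iffD2[OF permutes_in_image[OF p] i] .
qed

lemma relabel_inj:
  assumes p: "\<rho> permutes {1..n}" and w: "wfl n (fst C)"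
    and eq: "iso_class n (relabel \<rho> C) = iso_class n (relabel \<rho> D)"
  shows "iso_class n C = iso_class n D"
proof -
  have "curve_iso n (relabel \<rho> C) (relabel \<rho> D)" using iso_class_eqD[OF eq] .
  then have "curve_iso n (relabel (inv \<rho>) (relabel \<rho> C)) (relabel (inv \<rho>) (relabel \<rho> D))"
    by (rule iso_relabel[OF permutes_maps[OF permutes_inv[OF p]]])
  moreover have "\<rho> \<circ> inv \<rho> = id" using permutes_inv_o(1)[OF p] .
  ultimately have "curve_iso n C D" by (simp add: relabel_relabel relabel_id)
  then show ?thesis using iso_class_eq w by simp
qed

lemma adj_legv[simp]: "adj (G\<lparr>legv := x\<rparr>) S = adj G S"
  unfolding adj_def by simp

lemma valence_legv[simp]: "valence (G\<lparr>legv := x\<rparr>) v = valence G v"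
  unfolding valence_def by simp

lemma val0_single:
  assumes st: "stable_graph g n a G" and v: "v \<in> verts G" and val: "valence G v = 0"
  shows "verts G = {v}" "edges G = {}"
proof -
  have fe: "finite (edges G)" using st unfolding stable_graph_def by blast
  have e1: "{e\<in>edges G. fst (endp G e) = v} = {}" "{e\<in>edges G. snd (endp G e) = v} = {}"
    using val fe unfolding valence_def by auto
  have conn: "\<forall>u\<in>verts G. (v, u) \<in> (adj G (edges G))\<^sup>*" using st v unfolding stable_graph_def by blast
  show vv: "verts G = {v}"
  proof (rule ccontr)
    assume "verts G \<noteq> {v}"
    then obtain u where u: "u \<in> verts G" "u \<noteq> v" using v by blast
    then have "(v, u) \<in> (adj G (edges G))\<^sup>*" using conn by blast
    then obtain y where "(v, y) \<in> adj G (edges G)" using u(2) by (cases rule: converse_rtranclE) auto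
    then obtain e where "e \<in> edges G" "endp G e = (v, y) \<or> endp G e = (y, v)" unfolding adj_def by auto
    then show False using e1 by auto
  qed
  show "edges G = {}"
  proof (rule ccontr)
    assume "edges G \<noteq> {}"
    then obtain e where e: "e \<in> edges G" by blast
    then have "fst (endp G e) \<in> verts G" using st unfolding stable_graph_def by blast
    then show False using e e1 vv by auto
  qed
qed

lemma relabel_stable:
  assumes wa: "weight_datum g n a" and wb: "weight_datum g n b"
    and ps: "\<sigma> permutes {1..n}" and pt: "\<tau> permutes {1..n}"
    and ch: "chamber_le g n (a \<circ> \<sigma>) (b \<circ> \<tau>)"
    and st: "stable_graph g n a G"
  shows "stable_graph g n b (G\<lparr>legv := legv G \<circ> (\<sigma> \<circ> inv \<tau>)\<rparr>)"
proof -
  define \<rho> where "\<rho> = \<sigma> \<circ> inv \<tau>"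
  have pr: "\<rho> permutes {1..n}" unfolding \<rho>_def using permutes_compose[OF permutes_inv[OF pt] ps] .
  have a01: "\<forall>i\<in>{1..n}. 0 < a i \<and> a i \<le> 1" using wa unfolding weight_datum_def by blast
  have b01: "\<forall>i\<in>{1..n}. 0 < b i \<and> b i \<le> 1" using wb unfolding weight_datum_def by blast
  have bsum: "2 * real g - 2 + (\<Sum>i\<in>{1..n}. b i) > 0" using wb unfolding weight_datum_def by blast
  have stab: "\<forall>v\<in>verts G. 2 * real (wt G v) - 2 + real (valence G v)
                    + (\<Sum>i\<in>{i\<in>{1..n}. legv G i = v}. a i) > 0"
    and lgs: "\<forall>i\<in>{1..n}. legv G i \<in> verts G"
    using st unfolding stable_graph_def by blast+
  have key: "2 * real (wt G v) - 2 + real (valence G v) + (\<Sum>i\<in>{i\<in>{1..n}. legv G (\<rho> i) = v}. b i) > 0"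
    if v: "v \<in> verts G" for v
  proof -
    define S where "S = {j\<in>{1..n}. legv G j = v}"
    define S' where "S' = {i\<in>{1..n}. legv G (\<rho> i) = v}"
    define T where "T = inv \<sigma> ` S"
    have S1: "S \<subseteq> {1..n}" "S' \<subseteq> {1..n}" unfolding S_def S'_def by auto
    have finS: "finite S" "finite S'" "finite T" unfolding S_def S'_def T_def by auto
    have isig: "inv \<sigma> permutes {1..n}" using permutes_inv[OF ps] .
    have mis: "\<forall>i\<in>{1..n}. inv \<sigma> i \<in> {1..n}" using permutes_maps[OF isig] .
    have mt: "\<forall>i\<in>{1..n}. \<tau> i \<in> {1..n}" using permutes_maps[OF pt] .
    have mr: "\<forall>i\<in>{1..n}. \<rho> i \<in> {1..n}" using permutes_maps[OF pr] .
    have T1: "T \<subseteq> {1..n}" unfolding T_def using S1 mis by auto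
    have sigT: "\<sigma> ` T = S" unfolding T_def image_comp using permutes_inv_o(1)[OF ps] by simp
    have tauT: "\<tau> ` T = S'"
    proof
      show "\<tau> ` T \<subseteq> S'"
      proof
        fix x assume "x \<in> \<tau> ` T"
        then obtain j where j: "j \<in> S" "x = \<tau> (inv \<sigma> j)" unfolding T_def by blast
        have "j \<in> {1..n}" using j(1) S1 by auto
        then have "inv \<sigma> j \<in> {1..n}" using mis by simp
        then have "x \<in> {1..n}" using j(2) mt by simp
        moreover have "\<rho> x = j" unfolding \<rho>_def using j
          by (simp add: permutes_inverses(2)[OF pt] permutes_inverses(1)[OF ps])
        ultimately show "x \<in> S'" using j unfolding S'_def S_def by auto
      qed
    next
      show "S' \<subseteq> \<tau> ` T"
      proof
        fix i assume i: "i \<in> S'"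
        have "\<rho> i \<in> {1..n}" using i S1 mr by auto
        then have "\<rho> i \<in> S" using i unfolding S'_def S_def by simp
        then have "\<tau> (inv \<sigma> (\<rho> i)) \<in> \<tau> ` T" unfolding T_def by (intro imageI)
        moreover have "\<tau> (inv \<sigma> (\<rho> i)) = i" unfolding \<rho>_def
          by (simp add: permutes_inverses(2)[OF ps] permutes_inverses(1)[OF pt])
        ultimately show "i \<in> \<tau> ` T" by simp
      qed
    qed
    have injs: "inj_on \<sigma> T" "inj_on \<tau> T"
      using inj_on_subset[OF permutes_inj[OF ps] subset_UNIV] inj_on_subset[OF permutes_inj[OF pt] subset_UNIV] by auto
    have injis: "inj_on (inv \<sigma>) S" using inj_on_subset[OF permutes_inj[OF isig] subset_UNIV] by auto
    have sumA: "(\<Sum>i\<in>T. (a \<circ> \<sigma>) i) = (\<Sum>j\<in>S. a j)" using sum.reindex[OF injs(1), of a] sigT by simp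
    have sumB: "(\<Sum>i\<in>T. (b \<circ> \<tau>) i) = (\<Sum>j\<in>S'. b j)" using sum.reindex[OF injs(2), of b] tauT by simp
    have cardT: "card T = card S" unfolding T_def using card_image[OF injis] .
    have cardS': "card S' = card S" using card_image[OF injs(2)] tauT cardT by simp
    have SAle: "(\<Sum>j\<in>S. a j) \<le> real (card S)"
      using sum_bounded_above[of S a 1] a01 S1 by auto
    have SBge: "(\<Sum>j\<in>S'. b j) \<ge> 0" by (intro sum_nonneg) (use b01 S1 in force)
    have stv: "2 * real (wt G v) - 2 + real (valence G v) + (\<Sum>j\<in>S. a j) > 0"
      using stab v unfolding S_def by blast
    consider "2 * wt G v + valence G v \<ge> 3" | "2 * wt G v + valence G v = 2"
      | "wt G v = 0 \<and> valence G v = 1" | "wt G v = 0 \<and> valence G v = 0" by linarith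
    then show ?thesis
    proof cases
      case 1
      then have "2 * real (wt G v) - 2 + real (valence G v) \<ge> 1" by linarith
      then show ?thesis using SBge unfolding S'_def by linarith
    next
      case 2
      then have x: "2 * real (wt G v) - 2 + real (valence G v) = 0" by linarith
      then have "(\<Sum>j\<in>S. a j) > 0" using stv by linarith
      then have "S \<noteq> {}" by auto
      then have "S' \<noteq> {}" using tauT T_def by auto
      then have "(\<Sum>j\<in>S'. b j) > 0" using b01 S1 finS by (intro sum_pos) auto
      then show ?thesis using x unfolding S'_def by linarith
    next
      case 3
      then have SA: "(\<Sum>j\<in>S. a j) > 1" using stv by simp
      then have c2: "card S \<ge> 2" using SAle by linarith
      have "(\<Sum>j\<in>S'. b j) > 1"
      proof (cases "g \<ge> 1 \<or> card S + 2 \<le> n")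
        case True
        have cT: "card T \<le> n" using card_mono[OF finite_atLeastAtMost T1] by simp
        have "wall_index g n T" unfolding wall_index_def using True T1 cardT c2 cT by auto
        then have "(\<Sum>i\<in>T. (a \<circ> \<sigma>) i) > 1 \<longrightarrow> (\<Sum>i\<in>T. (b \<circ> \<tau>) i) > 1"
          using ch unfolding chamber_le_def by blast
        then show ?thesis using SA sumA sumB by simp
      next
        case False
        then have g0: "g = 0" and cn: "card S + 2 > n" by auto
        have "(\<Sum>i\<in>{1..n}. b i) > 2" using bsum g0 by simp
        moreover have "(\<Sum>i\<in>{1..n}. b i) = (\<Sum>j\<in>S'. b j) + (\<Sum>j\<in>{1..n} - S'. b j)"
          using sum.subset_diff[OF S1(2)] by (simp add: add.commute)
        moreover have "(\<Sum>j\<in>{1..n} - S'. b j) \<le> real (card ({1..n} - S'))"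
          using sum_bounded_above[of "{1..n} - S'" b 1] b01 by auto
        moreover have "card ({1..n} - S') = n - card S'" using card_Diff_subset[OF finS(2) S1(2)] by simp
        ultimately show ?thesis using cn cardS' by linarith
      qed
      then show ?thesis using 3 unfolding S'_def by simp
    next
      case 4
      have vs: "verts G = {v}" "edges G = {}" using val0_single[OF st v] 4 by auto
      have "int (card (edges G)) - int (card (verts G)) + 1 + (\<Sum>v\<in>verts G. int (wt G v)) = int g"
        using st unfolding stable_graph_def by blast
      then have g0: "g = 0" using vs 4 by simp
      have "S' = {1..n}"
      proof -
        have "legv G (\<rho> i) = v" if "i \<in> {1..n}" for i
        proof -
          have "\<rho> i \<in> {1..n}" using that permutes_maps[OF pr] by blast
          then show ?thesis using lgs vs(1) by blast
        qed
        then show ?thesis unfolding S'_def by blast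
      qed
      then show ?thesis using bsum g0 4 unfolding S'_def by simp
    qed
  qed
  have s: "finite (verts G)" "finite (edges G)" "verts G \<noteq> {}"
     "\<forall>e\<in>edges G. fst (endp G e) \<in> verts G \<and> snd (endp G e) \<in> verts G"
     "\<forall>u\<in>verts G. \<forall>v\<in>verts G. (u, v) \<in> (adj G (edges G))\<^sup>*"
     "int (card (edges G)) - int (card (verts G)) + 1 + (\<Sum>v\<in>verts G. int (wt G v)) = int g"
    using st unfolding stable_graph_def by blast+
  have mr: "\<forall>i\<in>{1..n}. \<rho> i \<in> {1..n}" using permutes_maps[OF pr] .
  show ?thesis unfolding stable_graph_def
  proof (intro conjI ballI)
    fix i assume "i \<in> {1..n}"
    then have "\<rho> i \<in> {1..n}" using mr by blast
    then show "legv (G\<lparr>legv := legv G \<circ> (\<sigma> \<circ> inv \<tau>)\<rparr>) i \<in> verts (G\<lparr>legv := legv G \<circ> (\<sigma> \<circ> inv \<tau>)\<rparr>)"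
      using lgs unfolding \<rho>_def by simp
  next
    fix v assume "v \<in> verts (G\<lparr>legv := legv G \<circ> (\<sigma> \<circ> inv \<tau>)\<rparr>)"
    then have "v \<in> verts G" by simp
    from key[OF this] show "0 < 2 * real (wt (G\<lparr>legv := legv G \<circ> (\<sigma> \<circ> inv \<tau>)\<rparr>) v) - 2
       + real (valence (G\<lparr>legv := legv G \<circ> (\<sigma> \<circ> inv \<tau>)\<rparr>) v)
       + (\<Sum>i\<in>{i \<in> {1..n}. legv (G\<lparr>legv := legv G \<circ> (\<sigma> \<circ> inv \<tau>)\<rparr>) i = v}. b i)"
      unfolding \<rho>_def by simp
  qed (use s in simp_all)
qed



lemma contract_simps[simp]:
  "verts (contract G S) = vrep G S ` verts G"
  "edges (contract G S) = edges G - S"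
  "endp (contract G S) e = map_prod (vrep G S) (vrep G S) (endp G e)"
  "legv (contract G S) i = vrep G S (legv G i)"
  "wt (contract G S) r = (\<Sum>u\<in>vclass G S r. wt G u)
        + (card {e\<in>S. fst (endp G e) \<in> vclass G S r} + 1 - card (vclass G S r))"
  unfolding contract_def by simp_all

lemma wfg_contract: "wfg G \<Longrightarrow> wfg (contract G S)"
  unfolding wfg_def by auto

lemma wfl_contract: "wfl n G \<Longrightarrow> wfl n (contract G S)"
  unfolding wfl_def using wfg_contract by auto

lemma endp_verts: "wfg G \<Longrightarrow> e \<in> edges G \<Longrightarrow> fst (endp G e) \<in> verts G \<and> snd (endp G e) \<in> verts G"
  unfolding wfg_def by blast

lemma path_map:
  assumes w: "wfg G" and ZY: "Z \<subseteq> Y" and YE: "Y \<subseteq> edges G"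
    and p: "(u, v) \<in> (adj G Y)\<^sup>*" and u: "u \<in> verts G"
  shows "(vrep G Z u, vrep G Z v) \<in> (adj (contract G Z) (Y - Z))\<^sup>*"
  using p
proof (induction rule: rtrancl_induct)
  case base then show ?case by simp
next
  case (step y z)
  from step.hyps(2) obtain e where e: "e \<in> Y" "endp G e = (y, z) \<or> endp G e = (z, y)"
    unfolding adj_def by auto
  have eE: "e \<in> edges G" using e(1) YE by blast
  have yz: "y \<in> verts G" "z \<in> verts G" using endp_verts[OF w eE] e(2) by auto
  have "(vrep G Z y, vrep G Z z) \<in> (adj (contract G Z) (Y - Z))\<^sup>*"
  proof (cases "e \<in> Z")
    case True
    then have "(y, z) \<in> adj G Z" using e(2) unfolding adj_def by auto
    then have "vrep G Z y = vrep G Z z" using vrep_eq_iff[OF w yz] by blast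
    then show ?thesis by simp
  next
    case False
    then have "(vrep G Z y, vrep G Z z) \<in> adj (contract G Z) (Y - Z)"
      using e unfolding adj_def by force
    then show ?thesis by blast
  qed
  from step.IH this show ?case by (rule rtrancl_trans)
qed

lemma path_back:
  assumes w: "wfg G" and ZY: "Z \<subseteq> Y" and YE: "Y \<subseteq> edges G"
    and p: "(vrep G Z u, t) \<in> (adj (contract G Z) (Y - Z))\<^sup>*" and u: "u \<in> verts G"
  shows "\<forall>v\<in>verts G. vrep G Z v = t \<longrightarrow> (u, v) \<in> (adj G Y)\<^sup>*"
  using p
proof (induction rule: rtrancl_induct)
  case base
  show ?case
  proof (intro ballI impI)
    fix v assume v: "v \<in> verts G" and eq: "vrep G Z v = vrep G Z u"
    then have "(v, u) \<in> (adj G Z)\<^sup>*" using vrep_eq_iff[OF w v u] by blast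
    then have "(u, v) \<in> (adj G Z)\<^sup>*" by (rule adj_rtrancl_sym)
    then show "(u, v) \<in> (adj G Y)\<^sup>*" using adj_rtrancl_mono[OF ZY] by blast
  qed
next
  case (step t1 t2)
  from step.hyps(2) obtain e where e: "e \<in> Y - Z"
    "map_prod (vrep G Z) (vrep G Z) (endp G e) = (t1, t2) \<or> map_prod (vrep G Z) (vrep G Z) (endp G e) = (t2, t1)"
    unfolding adj_def by auto
  obtain x y where xy: "endp G e = (x, y)" by (cases "endp G e")
  have eE: "e \<in> edges G" using e(1) YE by blast
  have xyv: "x \<in> verts G" "y \<in> verts G" using endp_verts[OF w eE] xy by auto
  have exy: "(x, y) \<in> adj G Y" "(y, x) \<in> adj G Y" using e(1) xy unfolding adj_def by auto
  show ?case
  proof (intro ballI impI)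
    fix v assume v: "v \<in> verts G" and eq: "vrep G Z v = t2"
    from e(2) xy have "(vrep G Z x = t1 \<and> vrep G Z y = t2) \<or> (vrep G Z y = t1 \<and> vrep G Z x = t2)" by auto
    then show "(u, v) \<in> (adj G Y)\<^sup>*"
    proof
      assume h: "vrep G Z x = t1 \<and> vrep G Z y = t2"
      have "(u, x) \<in> (adj G Y)\<^sup>*" using step.IH xyv h by blast
      moreover have "(y, v) \<in> (adj G Y)\<^sup>*"
      proof -
        have "(y, v) \<in> (adj G Z)\<^sup>*" using vrep_eq_iff[OF w xyv(2) v, of Z] h eq by simp
        then show ?thesis using adj_rtrancl_mono[OF ZY] by blast
      qed
      ultimately show ?thesis using exy(1) by (meson rtrancl_into_rtrancl rtrancl_trans)
    next
      assume h: "vrep G Z y = t1 \<and> vrep G Z x = t2"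
      have "(u, y) \<in> (adj G Y)\<^sup>*" using step.IH xyv h by blast
      moreover have "(x, v) \<in> (adj G Y)\<^sup>*"
      proof -
        have "(x, v) \<in> (adj G Z)\<^sup>*" using vrep_eq_iff[OF w xyv(1) v, of Z] h eq by simp
        then show ?thesis using adj_rtrancl_mono[OF ZY] by blast
      qed
      ultimately show ?thesis using exy(2) by (meson rtrancl_into_rtrancl rtrancl_trans)
    qed
  qed
qed

lemma group_verts:
  assumes w: "wfg G" and K: "K \<subseteq> verts G" and cl: "\<forall>u\<in>K. vclass G S u \<subseteq> K"
  shows "(\<Sum>u\<in>K. F u) = (\<Sum>r\<in>vrep G S ` K. \<Sum>u\<in>vclass G S r. F u)"
proof -
  have fK: "finite K" using K w unfolding wfg_def using finite_subset by blast
  have "(\<Sum>u\<in>K. F u) = (\<Sum>r\<in>vrep G S ` K. \<Sum>u\<in>{u\<in>K. vrep G S u = r}. F u)"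
    by (rule sum.image_gen[OF fK])
  also have "\<dots> = (\<Sum>r\<in>vrep G S ` K. \<Sum>u\<in>vclass G S r. F u)"
  proof (rule sum.cong[OF refl])
    fix r assume "r \<in> vrep G S ` K"
    then obtain u0 where u0: "u0 \<in> K" "r = vrep G S u0" by blast
    have u0v: "u0 \<in> verts G" using u0 K by blast
    have "{u\<in>K. vrep G S u = r} = vclass G S r"
    proof
      show "{u\<in>K. vrep G S u = r} \<subseteq> vclass G S r"
        using vrep_eq_class[OF w _ u0v] vclass_vrep[OF w u0v] u0 K by auto
      show "vclass G S r \<subseteq> {u\<in>K. vrep G S u = r}"
      proof
        fix u assume "u \<in> vclass G S r"
        then have u: "u \<in> vclass G S u0" using vclass_vrep[OF w u0v] u0 by simp
        then have "u \<in> verts G" using vclass_sub by blast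
        then show "u \<in> {u\<in>K. vrep G S u = r}" using u cl u0 vrep_eq_class[OF w _ u0v] by blast
      qed
    qed
    then show "(\<Sum>u\<in>{u\<in>K. vrep G S u = r}. F u) = (\<Sum>u\<in>vclass G S r. F u)" by simp
  qed
  finally show ?thesis .
qed

lemma group_edges:
  assumes w: "wfg G" and K: "K \<subseteq> verts G" and fA: "finite A" and A: "\<forall>e\<in>A. fst (endp G e) \<in> K"
  shows "card A = (\<Sum>r\<in>vrep G S ` K. card {e\<in>A. fst (endp G e) \<in> vclass G S r})"
proof -
  have fK: "finite K" using K w unfolding wfg_def using finite_subset by blast
  have "card A = (\<Sum>e\<in>A. 1::nat)" by simp
  also have "\<dots> = (\<Sum>r\<in>vrep G S ` K. \<Sum>e\<in>{e\<in>A. vrep G S (fst (endp G e)) = r}. 1)"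
    by (rule sum.group[symmetric]) (use fA fK A in auto)
  also have "\<dots> = (\<Sum>r\<in>vrep G S ` K. card {e\<in>A. fst (endp G e) \<in> vclass G S r})"
  proof (rule sum.cong[OF refl])
    fix r assume "r \<in> vrep G S ` K"
    then obtain u0 where u0: "u0 \<in> K" "r = vrep G S u0" by blast
    have u0v: "u0 \<in> verts G" using u0 K by blast
    have "{e\<in>A. vrep G S (fst (endp G e)) = r} = {e\<in>A. fst (endp G e) \<in> vclass G S r}"
    proof (rule Collect_cong, rule conj_cong[OF refl])
      fix e assume "e \<in> A"
      then have "fst (endp G e) \<in> verts G" using A K by blast
      then show "(vrep G S (fst (endp G e)) = r) = (fst (endp G e) \<in> vclass G S r)"
        using vrep_eq_class[OF w _ u0v] vclass_vrep[OF w u0v] u0 by simp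
    qed
    then show "(\<Sum>e\<in>{e\<in>A. vrep G S (fst (endp G e)) = r}. 1) = card {e\<in>A. fst (endp G e) \<in> vclass G S r}"
      by simp
  qed
  finally show ?thesis .
qed



lemma sum_group2:
  assumes "finite A" "finite C"
  shows "(\<Sum>u\<in>C. \<Sum>e\<in>{e\<in>A. g e = u}. h e) = (\<Sum>e\<in>{e\<in>A. g e \<in> C}. h e)"
proof -
  have "(\<Sum>e\<in>{e\<in>A. g e \<in> C}. h e) = (\<Sum>u\<in>C. \<Sum>e\<in>{x\<in>{e\<in>A. g e \<in> C}. g x = u}. h e)"
    by (rule sum.group[symmetric]) (use assms in auto)
  also have "\<dots> = (\<Sum>u\<in>C. \<Sum>e\<in>{e\<in>A. g e = u}. h e)"
  proof (rule sum.cong[OF refl])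
    fix u assume "u \<in> C"
    then have "{x\<in>{e\<in>A. g e \<in> C}. g x = u} = {e\<in>A. g e = u}" by auto
    then show "(\<Sum>e\<in>{x\<in>{e\<in>A. g e \<in> C}. g x = u}. h e) = (\<Sum>e\<in>{e\<in>A. g e = u}. h e)" by simp
  qed
  finally show ?thesis by simp
qed

lemma card_group:
  assumes "finite A" "finite C"
  shows "(\<Sum>u\<in>C. card {e\<in>A. g e = u}) = card {e\<in>A. g e \<in> C}"
  using sum_group2[OF assms, where g=g and h="\<lambda>_. 1::nat"] by simp

lemma vclass_mem_vrep:
  assumes w: "wfg G" and x: "x \<in> verts G" and y: "y \<in> verts G"
  shows "y \<in> vclass G S (vrep G S x) \<longleftrightarrow> vrep G S y = vrep G S x"
  using vrep_eq_class[OF w y x] vclass_vrep[OF w x] by simp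

lemma contract_stable:
  assumes st: "stable_graph g n a G" and SE: "S \<subseteq> edges G"
  shows "stable_graph g n a (contract G S)"
proof -
  have s: "finite (verts G)" "finite (edges G)" "verts G \<noteq> {}"
     "\<forall>e\<in>edges G. fst (endp G e) \<in> verts G \<and> snd (endp G e) \<in> verts G"
     "\<forall>i\<in>{1..n}. legv G i \<in> verts G"
     "\<forall>u\<in>verts G. \<forall>v\<in>verts G. (u, v) \<in> (adj G (edges G))\<^sup>*"
     "int (card (edges G)) - int (card (verts G)) + 1 + (\<Sum>v\<in>verts G. int (wt G v)) = int g"
     "\<forall>v\<in>verts G. 2 * real (wt G v) - 2 + real (valence G v) + (\<Sum>i\<in>{i\<in>{1..n}. legv G i = v}. a i) > 0"
    using st unfolding stable_graph_def by blast+
  have w: "wfg G" using s unfolding wfg_def by blast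
  define V where "V = verts G"
  define E where "E = edges G"
  define R where "R = vrep G S ` V"
  define C where "C r = vclass G S r" for r
  define zc where "zc r = card {e\<in>S. fst (endp G e) \<in> C r}" for r
  have finS: "finite S" using SE s(2) finite_subset by blast
  have tree: "card (C r) \<le> zc r + 1" for r unfolding C_def zc_def using tree_bound[OF w SE] .
  have wt1: "wt (contract G S) r = (\<Sum>u\<in>C r. wt G u) + (zc r + 1 - card (C r))" for r
    unfolding C_def zc_def by simp
  have finC: "finite (C r)" for r unfolding C_def using finite_vclass[OF w] .
  have CV: "C r \<subseteq> V" for r unfolding C_def V_def using vclass_sub .
  show ?thesis unfolding stable_graph_def
  proof (intro conjI ballI)
    show "finite (verts (contract G S))" using s(1) by simp
    show "finite (edges (contract G S))" using s(2) by simp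
    show "verts (contract G S) \<noteq> {}" using s(3) by simp
  next
    fix e assume "e \<in> edges (contract G S)"
    then have "e \<in> edges G" by simp
    then show "fst (endp (contract G S) e) \<in> verts (contract G S)"
              "snd (endp (contract G S) e) \<in> verts (contract G S)"
      using s(4) by (cases "endp G e", force)+
  next
    fix i assume "i \<in> {1..n}"
    then show "legv (contract G S) i \<in> verts (contract G S)" using s(5) by simp
  next
    fix u' v' assume "u' \<in> verts (contract G S)" "v' \<in> verts (contract G S)"
    then obtain u v where uv: "u \<in> verts G" "v \<in> verts G" "u' = vrep G S u" "v' = vrep G S v" by auto
    have "(u, v) \<in> (adj G (edges G))\<^sup>*" using s(6) uv by blast
    then have "(vrep G S u, vrep G S v) \<in> (adj (contract G S) (edges G - S))\<^sup>*"
      by (rule path_map[OF w SE order_refl _ uv(1)])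
    then show "(u', v') \<in> (adj (contract G S) (edges (contract G S)))\<^sup>*" using uv by simp
  next
    have i1: "int (wt (contract G S) r) = (\<Sum>u\<in>C r. int (wt G u)) + int (zc r) + 1 - int (card (C r))" for r
      using wt1[of r] tree[of r] by (simp add: of_nat_diff)
    have g1: "(\<Sum>u\<in>V. int (wt G u)) = (\<Sum>r\<in>R. \<Sum>u\<in>C r. int (wt G u))"
      unfolding R_def C_def V_def by (rule group_verts[OF w order_refl]) (simp add: vclass_sub)
    have g2: "card V = (\<Sum>r\<in>R. card (C r))"
      using group_verts[OF w order_refl, of S "\<lambda>_. 1::nat"] unfolding R_def C_def V_def by (simp add: vclass_sub)
    have g3: "card S = (\<Sum>r\<in>R. zc r)"
      unfolding R_def zc_def C_def V_def by (rule group_edges[OF w order_refl finS]) (use SE s(4) in blast)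
    have "(\<Sum>r\<in>R. int (wt (contract G S) r)) = (\<Sum>r\<in>R. (\<Sum>u\<in>C r. int (wt G u)) + int (zc r) + 1 - int (card (C r)))"
      using i1 by simp
    also have "\<dots> = (\<Sum>r\<in>R. \<Sum>u\<in>C r. int (wt G u)) + int (\<Sum>r\<in>R. zc r) + int (card R) - int (\<Sum>r\<in>R. card (C r))"
      by (simp add: sum.distrib sum_subtractf)
    also have "\<dots> = (\<Sum>u\<in>V. int (wt G u)) + int (card S) + int (card R) - int (card V)"
      using g1 g2 g3 by simp
    finally have sw: "(\<Sum>r\<in>R. int (wt (contract G S) r)) = (\<Sum>u\<in>V. int (wt G u)) + int (card S) + int (card R) - int (card V)" .
    have ce: "card (edges G - S) = card E - card S" unfolding E_def using card_Diff_subset[OF finS SE] .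
    have "card S \<le> card E" unfolding E_def using card_mono[OF s(2) SE] .
    then show "int (card (edges (contract G S))) - int (card (verts (contract G S))) + 1
       + (\<Sum>v\<in>verts (contract G S). int (wt (contract G S) v)) = int g"
      using sw ce s(7) unfolding R_def V_def E_def by (simp add: of_nat_diff)
  next
    fix r assume "r \<in> verts (contract G S)"
    then obtain x where x: "x \<in> V" "r = vrep G S x" unfolding V_def by auto
    have memC: "y \<in> C r \<longleftrightarrow> vrep G S y = r" if "y \<in> V" for y
      unfolding C_def x(2) using vclass_mem_vrep[OF w, of x y S] x(1) that unfolding V_def by simp
    have xC: "x \<in> C r" using memC x by simp
    have v1: "valence (contract G S) r = card {e\<in>E - S. fst (endp G e) \<in> C r} + card {e\<in>E - S. snd (endp G e) \<in> C r}"
    proof -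
      have "{e\<in>edges G - S. vrep G S (fst (endp G e)) = r} = {e\<in>E - S. fst (endp G e) \<in> C r}"
        using memC s(4) unfolding E_def V_def by auto
      moreover have "{e\<in>edges G - S. vrep G S (snd (endp G e)) = r} = {e\<in>E - S. snd (endp G e) \<in> C r}"
        using memC s(4) unfolding E_def V_def by auto
      ultimately show ?thesis unfolding valence_def by (simp add: fst_map_prod snd_map_prod)
    qed
    have sv: "(\<Sum>u\<in>C r. valence G u) = card {e\<in>E. fst (endp G e) \<in> C r} + card {e\<in>E. snd (endp G e) \<in> C r}"
      unfolding valence_def E_def
      by (simp add: sum.distrib card_group[OF s(2) finC])
    have split1: "card {e\<in>E. fst (endp G e) \<in> C r} = card {e\<in>E - S. fst (endp G e) \<in> C r} + zc r"
    proof -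
      have "{e\<in>E. fst (endp G e) \<in> C r} = {e\<in>E - S. fst (endp G e) \<in> C r} \<union> {e\<in>S. fst (endp G e) \<in> C r}"
        using SE unfolding E_def by auto
      then show ?thesis unfolding zc_def using finS s(2) unfolding E_def
        by (simp add: card_Un_disjoint disjoint_iff)
    qed
    have sSS: "{e\<in>S. snd (endp G e) \<in> C r} = {e\<in>S. fst (endp G e) \<in> C r}"
    proof (rule Collect_cong, rule conj_cong[OF refl])
      fix e assume e: "e \<in> S"
      then have ev: "fst (endp G e) \<in> V" "snd (endp G e) \<in> V" using SE s(4) unfolding V_def by auto
      have "(fst (endp G e), snd (endp G e)) \<in> adj G S" using e unfolding adj_def by force
      then have "vrep G S (fst (endp G e)) = vrep G S (snd (endp G e))"
        using vrep_eq_iff[OF w, of "fst (endp G e)" "snd (endp G e)" S] ev unfolding V_def by blast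
      then show "(snd (endp G e) \<in> C r) = (fst (endp G e) \<in> C r)" using memC ev by simp
    qed
    have split2: "card {e\<in>E. snd (endp G e) \<in> C r} = card {e\<in>E - S. snd (endp G e) \<in> C r} + zc r"
    proof -
      have "{e\<in>E. snd (endp G e) \<in> C r} = {e\<in>E - S. snd (endp G e) \<in> C r} \<union> {e\<in>S. snd (endp G e) \<in> C r}"
        using SE unfolding E_def by auto
      then show ?thesis unfolding zc_def sSS[symmetric] using finS s(2) unfolding E_def
        by (simp add: card_Un_disjoint disjoint_iff)
    qed
    have legs1: "{i\<in>{1..n}. legv (contract G S) i = r} = {i\<in>{1..n}. legv G i \<in> C r}"
      using memC s(5) unfolding V_def by auto
    have sl: "(\<Sum>u\<in>C r. \<Sum>i\<in>{i\<in>{1..n}. legv G i = u}. a i) = (\<Sum>i\<in>{i\<in>{1..n}. legv G i \<in> C r}. a i)"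
      using sum_group2[OF finite_atLeastAtMost finC, where g="legv G" and h=a] by simp
    have pos: "(\<Sum>u\<in>C r. 2 * real (wt G u) - 2 + real (valence G u) + (\<Sum>i\<in>{i\<in>{1..n}. legv G i = u}. a i)) > 0"
    proof (rule sum_pos[OF finC])
      show "C r \<noteq> {}" using xC by blast
      fix u assume "u \<in> C r"
      then show "2 * real (wt G u) - 2 + real (valence G u) + (\<Sum>i\<in>{i\<in>{1..n}. legv G i = u}. a i) > 0"
        using s(8) CV unfolding V_def by blast
    qed
    have exp: "(\<Sum>u\<in>C r. 2 * real (wt G u) - 2 + real (valence G u) + (\<Sum>i\<in>{i\<in>{1..n}. legv G i = u}. a i))
        = 2 * real (\<Sum>u\<in>C r. wt G u) - 2 * real (card (C r)) + real (\<Sum>u\<in>C r. valence G u)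
          + (\<Sum>u\<in>C r. \<Sum>i\<in>{i\<in>{1..n}. legv G i = u}. a i)"
      by (simp add: sum.distrib sum_subtractf sum_distrib_left)
    have rw: "real (wt (contract G S) r) = real (\<Sum>u\<in>C r. wt G u) + real (zc r) + 1 - real (card (C r))"
      using wt1[of r] tree[of r] by (simp add: of_nat_diff)
    show "2 * real (wt (contract G S) r) - 2 + real (valence (contract G S) r)
        + (\<Sum>i\<in>{i\<in>{1..n}. legv (contract G S) i = r}. a i) > 0"
      using pos exp rw v1 sv split1 split2 legs1 sl by simp
  qed
qed



lemma contract_comp_iso:
  assumes wl: "wfl n G" and ZY: "Z \<subseteq> Y" and YE: "Y \<subseteq> edges G"
  shows "curve_iso n (contract G Y, l) (contract (contract G Z) (Y - Z), l)"
proof -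
  have w: "wfg G" using wl unfolding wfl_def by blast
  define G1 where "G1 = contract G Z"
  define Y' where "Y' = Y - Z"
  define V where "V = verts G"
  have w1: "wfg G1" unfolding G1_def using wfg_contract[OF w] .
  have ZE: "Z \<subseteq> edges G" using ZY YE by blast
  have Y'E: "Y' \<subseteq> edges G1" unfolding Y'_def G1_def using YE by auto
  have V1: "verts G1 = vrep G Z ` V" unfolding G1_def V_def by simp
  have r1V: "vrep G Z x \<in> verts G1" if "x \<in> V" for x using V1 that by blast
  have pm: "(vrep G Z u, vrep G Z v) \<in> (adj G1 Y')\<^sup>*" if "(u, v) \<in> (adj G Y)\<^sup>*" "u \<in> V" for u v
    unfolding G1_def Y'_def using path_map[OF w ZY YE that(1)] that(2) unfolding V_def by blast
  have pb: "(u, v) \<in> (adj G Y)\<^sup>*" if "(vrep G Z u, vrep G Z v) \<in> (adj G1 Y')\<^sup>*" "u \<in> V" "v \<in> V" for u v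
    using path_back[OF w ZY YE, of u "vrep G Z v"] that unfolding G1_def Y'_def V_def by blast
  have a: "vrep G1 Y' (vrep G Z (vrep G Y x)) = vrep G1 Y' (vrep G Z x)" if x: "x \<in> V" for x
  proof -
    have "(x, vrep G Y x) \<in> (adj G Y)\<^sup>*" using vrep_rel[OF w] x unfolding V_def by blast
    then have "(vrep G Z x, vrep G Z (vrep G Y x)) \<in> (adj G1 Y')\<^sup>*" using pm x by blast
    moreover have "vrep G Y x \<in> V" using vrep_verts[OF w] x unfolding V_def by blast
    ultimately show ?thesis using vrep_eq_iff[OF w1 r1V r1V] x by metis
  qed
  have b: "vrep G1 Y' (vrep G Z x) = vrep G1 Y' (vrep G Z y) \<longleftrightarrow> vrep G Y x = vrep G Y y"
    if x: "x \<in> V" and y: "y \<in> V" for x y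
  proof
    assume "vrep G1 Y' (vrep G Z x) = vrep G1 Y' (vrep G Z y)"
    then have "(vrep G Z x, vrep G Z y) \<in> (adj G1 Y')\<^sup>*" using vrep_eq_iff[OF w1 r1V[OF x] r1V[OF y]] by blast
    then have "(x, y) \<in> (adj G Y)\<^sup>*" using pb x y by blast
    then show "vrep G Y x = vrep G Y y" using vrep_eq_iff[OF w, of x y Y] x y unfolding V_def by blast
  next
    assume "vrep G Y x = vrep G Y y"
    then have "(x, y) \<in> (adj G Y)\<^sup>*" using vrep_eq_iff[OF w, of x y Y] x y unfolding V_def by blast
    then have "(vrep G Z x, vrep G Z y) \<in> (adj G1 Y')\<^sup>*" using pm x by blast
    then show "vrep G1 Y' (vrep G Z x) = vrep G1 Y' (vrep G Z y)" using vrep_eq_iff[OF w1 r1V[OF x] r1V[OF y]] by blast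
  qed
  define f where "f r = vrep G1 Y' (vrep G Z r)" for r
  have fa: "f (vrep G Y x) = vrep G1 Y' (vrep G Z x)" if "x \<in> V" for x unfolding f_def using a that .
  have bij: "bij_betw f (verts (contract G Y)) (verts (contract G1 Y'))"
    unfolding bij_betw_def
  proof
    show "inj_on f (verts (contract G Y))"
    proof (rule inj_onI)
      fix r s assume "r \<in> verts (contract G Y)" "s \<in> verts (contract G Y)" "f r = f s"
      then obtain x y where "x \<in> V" "y \<in> V" "r = vrep G Y x" "s = vrep G Y y" "f r = f s" unfolding V_def by auto
      then show "r = s" using fa b by metis
    qed
    have "f ` verts (contract G Y) = (\<lambda>x. f (vrep G Y x)) ` V" unfolding V_def by (simp add: image_comp)
    also have "\<dots> = (\<lambda>x. vrep G1 Y' (vrep G Z x)) ` V" using fa by (intro image_cong) auto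
    also have "\<dots> = verts (contract G1 Y')" using V1 by (simp add: image_comp)
    finally show "f ` verts (contract G Y) = verts (contract G1 Y')" .
  qed
  have edg: "edges (contract G1 Y') = edges (contract G Y)" unfolding G1_def Y'_def using ZY by auto
  have wteq: "wt (contract G1 Y') (f r) = wt (contract G Y) r" if r: "r \<in> verts (contract G Y)" for r
  proof -
    obtain x where x: "x \<in> V" "r = vrep G Y x" using r unfolding V_def by auto
    define K where "K = vclass G Y r"
    define K' where "K' = vclass G1 Y' (f r)"
    define ZK where "ZK = {e\<in>Z. fst (endp G e) \<in> K}"
    define cY where "cY = card {e\<in>Y. fst (endp G e) \<in> K}"
    define c' where "c' = card {e\<in>Y'. fst (endp G1 e) \<in> K'}"
    define c'' where "c'' = card {e\<in>Y'. fst (endp G e) \<in> K}"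
    have xV: "x \<in> verts G" using x(1) unfolding V_def by simp
    have KV: "K \<subseteq> V" unfolding K_def V_def using vclass_sub .
    have finK: "finite K" unfolding K_def using finite_vclass[OF w] .
    have Kx: "K = vclass G Y x" unfolding K_def x(2) using vclass_vrep[OF w xV] .
    have memK: "u \<in> K \<longleftrightarrow> (x, u) \<in> (adj G Y)\<^sup>*" if "u \<in> V" for u
      unfolding Kx using that vclass_mem_iff unfolding V_def by blast
    have Kcl: "\<forall>u\<in>K. vclass G Z u \<subseteq> K"
    proof (intro ballI subsetI)
      fix u w' assume u: "u \<in> K" and w': "w' \<in> vclass G Z u"
      have uV: "u \<in> V" using u KV by blast
      have w'V: "w' \<in> V" using w' vclass_sub unfolding V_def by blast
      have "(u, w') \<in> (adj G Z)\<^sup>*" using w' vclass_mem_iff by blast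
      then have "(u, w') \<in> (adj G Y)\<^sup>*" using adj_rtrancl_mono[OF ZY] by blast
      moreover have "(x, u) \<in> (adj G Y)\<^sup>*" using memK uV u by blast
      ultimately have "(x, w') \<in> (adj G Y)\<^sup>*" by (rule rtrancl_trans[rotated])
      then show "w' \<in> K" using memK w'V by blast
    qed
    have K'eq: "K' = vrep G Z ` K"
    proof -
      have "K' = vclass G1 Y' (vrep G Z x)" unfolding K'_def x(2) fa[OF x(1)]
        using vclass_vrep[OF w1 r1V[OF x(1)]] by simp
      also have "\<dots> = vrep G Z ` K"
      proof
        show "vclass G1 Y' (vrep G Z x) \<subseteq> vrep G Z ` K"
        proof
          fix s assume s: "s \<in> vclass G1 Y' (vrep G Z x)"
          then obtain u where u: "u \<in> V" "s = vrep G Z u" using vclass_sub V1 by blast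
          have "(vrep G Z x, vrep G Z u) \<in> (adj G1 Y')\<^sup>*" using s u vclass_mem_iff by blast
          then have "(x, u) \<in> (adj G Y)\<^sup>*" using pb x(1) u(1) by blast
          then show "s \<in> vrep G Z ` K" using memK u by blast
        qed
        show "vrep G Z ` K \<subseteq> vclass G1 Y' (vrep G Z x)"
        proof
          fix s assume "s \<in> vrep G Z ` K"
          then obtain u where u: "u \<in> K" "s = vrep G Z u" by blast
          have uV: "u \<in> V" using u KV by blast
          have "(x, u) \<in> (adj G Y)\<^sup>*" using memK uV u by blast
          then have "(vrep G Z x, vrep G Z u) \<in> (adj G1 Y')\<^sup>*" using pm x(1) by blast
          then show "s \<in> vclass G1 Y' (vrep G Z x)" using u r1V[OF uV] vclass_mem_iff by blast
        qed
      qed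
      finally show ?thesis .
    qed
    define C where "C s = vclass G Z s" for s
    define zc where "zc s = card {e\<in>Z. fst (endp G e) \<in> C s}" for s
    have tree: "card (C s) \<le> zc s + 1" for s unfolding C_def zc_def using tree_bound[OF w ZE] .
    have CK: "C s \<subseteq> K" if sK: "s \<in> vrep G Z ` K" for s
    proof -
      obtain u where u: "u \<in> K" "s = vrep G Z u" using sK by blast
      have uV: "u \<in> verts G" using u KV unfolding V_def by blast
      show ?thesis unfolding C_def u(2) vclass_vrep[OF w uV] using Kcl u by blast
    qed
    have wt1: "int (wt G1 s) = (\<Sum>u\<in>C s. int (wt G u)) + int (zc s) + 1 - int (card (C s))" for s
      using tree[of s] unfolding G1_def C_def zc_def by (simp add: of_nat_diff)
    have g1: "(\<Sum>u\<in>K. int (wt G u)) = (\<Sum>s\<in>vrep G Z ` K. \<Sum>u\<in>C s. int (wt G u))"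
      unfolding C_def using group_verts[OF w KV[unfolded V_def] Kcl] .
    have g2: "card K = (\<Sum>s\<in>vrep G Z ` K. card (C s))"
      unfolding C_def using group_verts[OF w KV[unfolded V_def] Kcl, of "\<lambda>_. 1::nat"] by simp
    have finZ: "finite Z" using ZE w unfolding wfg_def using finite_subset by blast
    have g3: "card ZK = (\<Sum>s\<in>vrep G Z ` K. zc s)"
    proof -
      have "card ZK = (\<Sum>s\<in>vrep G Z ` K. card {e\<in>ZK. fst (endp G e) \<in> vclass G Z s})"
        by (rule group_edges[OF w KV[unfolded V_def]]) (auto simp: ZK_def finZ)
      also have "\<dots> = (\<Sum>s\<in>vrep G Z ` K. zc s)"
      proof (rule sum.cong[OF refl])
        fix s assume "s \<in> vrep G Z ` K"
        then have "C s \<subseteq> K" by (rule CK)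
        then have "{e\<in>ZK. fst (endp G e) \<in> vclass G Z s} = {e\<in>Z. fst (endp G e) \<in> C s}"
          unfolding ZK_def C_def by auto
        then show "card {e\<in>ZK. fst (endp G e) \<in> vclass G Z s} = zc s" unfolding zc_def by simp
      qed
      finally show ?thesis .
    qed
    have sum1: "(\<Sum>s\<in>K'. int (wt G1 s)) = (\<Sum>u\<in>K. int (wt G u)) + int (card ZK) + int (card K') - int (card K)"
    proof -
      have "(\<Sum>s\<in>K'. int (wt G1 s)) = (\<Sum>s\<in>vrep G Z ` K. (\<Sum>u\<in>C s. int (wt G u)) + int (zc s) + 1 - int (card (C s)))"
        unfolding K'eq using wt1 by simp
      also have "\<dots> = (\<Sum>s\<in>vrep G Z ` K. \<Sum>u\<in>C s. int (wt G u)) + int (\<Sum>s\<in>vrep G Z ` K. zc s)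
          + int (card (vrep G Z ` K)) - int (\<Sum>s\<in>vrep G Z ` K. card (C s))"
        by (simp add: sum.distrib sum_subtractf)
      finally show ?thesis using g1 g2 g3 K'eq by simp
    qed
    have c'eq: "c' = c''"
    proof -
      have "{e\<in>Y'. fst (endp G1 e) \<in> K'} = {e\<in>Y'. fst (endp G e) \<in> K}"
      proof (rule Collect_cong, rule conj_cong[OF refl])
        fix e assume e: "e \<in> Y'"
        then have yV: "fst (endp G e) \<in> V" using YE endp_verts[OF w] unfolding Y'_def V_def by blast
        show "(fst (endp G1 e) \<in> K') = (fst (endp G e) \<in> K)"
        proof
          assume "fst (endp G1 e) \<in> K'"
          then have "vrep G Z (fst (endp G e)) \<in> vrep G Z ` K" unfolding G1_def K'eq by (simp add: fst_map_prod)
          then obtain u where u: "u \<in> K" "vrep G Z (fst (endp G e)) = vrep G Z u" by blast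
          have uV: "u \<in> verts G" using u KV unfolding V_def by blast
          have "fst (endp G e) \<in> vclass G Z u" using vrep_eq_class[OF w _ uV] yV u(2) unfolding V_def by blast
          then show "fst (endp G e) \<in> K" using Kcl u(1) by blast
        next
          assume "fst (endp G e) \<in> K"
          then show "fst (endp G1 e) \<in> K'" unfolding G1_def K'eq by (simp add: fst_map_prod)
        qed
      qed
      then show ?thesis unfolding c'_def c''_def by simp
    qed
    have cYeq: "cY = card ZK + c''"
    proof -
      have "{e\<in>Y. fst (endp G e) \<in> K} = ZK \<union> {e\<in>Y'. fst (endp G e) \<in> K}"
        unfolding ZK_def Y'_def using ZY by auto
      moreover have "finite Y" using YE w unfolding wfg_def using finite_subset by blast
      moreover have "card (ZK \<union> {e\<in>Y'. fst (endp G e) \<in> K}) = card ZK + card {e\<in>Y'. fst (endp G e) \<in> K}"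
        by (rule card_Un_disjoint) (use finZ \<open>finite Y\<close> in \<open>auto simp: ZK_def Y'_def\<close>)
      ultimately show ?thesis unfolding cY_def c''_def by simp
    qed
    have t1: "card K \<le> cY + 1" unfolding K_def cY_def using tree_bound[OF w YE] .
    have t2: "card K' \<le> c' + 1" unfolding K'_def c'_def using tree_bound[OF w1 Y'E] .
    have "int (wt (contract G1 Y') (f r)) = (\<Sum>s\<in>K'. int (wt G1 s)) + int c' + 1 - int (card K')"
      unfolding K'_def c'_def using t2[unfolded K'_def c'_def] by (simp add: of_nat_diff)
    moreover have "int (wt (contract G Y) r) = (\<Sum>u\<in>K. int (wt G u)) + int cY + 1 - int (card K)"
      unfolding K_def cY_def using t1[unfolded K_def cY_def] by (simp add: of_nat_diff)
    ultimately have "int (wt (contract G1 Y') (f r)) = int (wt (contract G Y) r)"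
      using sum1 c'eq cYeq by simp
    then show ?thesis by (simp only: of_nat_eq_iff)
  qed
  show ?thesis unfolding curve_iso_def prod.case G1_def[symmetric] Y'_def[symmetric]
  proof (rule exI[of _ f], rule exI[of _ id], intro conjI ballI)
    show "bij_betw f (verts (contract G Y)) (verts (contract G1 Y'))" using bij .
    show "bij_betw id (edges (contract G Y)) (edges (contract G1 Y'))" using edg by simp
  next
    fix e assume e: "e \<in> edges (contract G Y)"
    then have eE: "e \<in> edges G" by simp
    obtain p q where pq: "endp G e = (p, q)" by (cases "endp G e")
    have pqV: "p \<in> V" "q \<in> V" using endp_verts[OF w eE] pq unfolding V_def by auto
    have "endp (contract G1 Y') (id e) = map_prod f f (endp (contract G Y) e)"
      using pq fa[OF pqV(1)] fa[OF pqV(2)] unfolding G1_def by simp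
    then show "endp (contract G1 Y') (id e) = map_prod f f (endp (contract G Y) e) \<or>
        endp (contract G1 Y') (id e) = prod.swap (map_prod f f (endp (contract G Y) e))" by blast
  next
    fix r assume "r \<in> verts (contract G Y)"
    then show "wt (contract G1 Y') (f r) = wt (contract G Y) r" by (rule wteq)
  next
    fix i assume "i \<in> {1..n}"
    then have "legv G i \<in> V" using wl unfolding wfl_def V_def by blast
    then show "legv (contract G1 Y') i = f (legv (contract G Y) i)" using fa unfolding G1_def by simp
  next
    fix e show "l (id e) = l e" by simp
  qed
qed



lemma cone_map_in:
  assumes st: "stable_graph g n a G" and l: "l \<in> cone_set fin (edges G)"
  shows "cone_map n G l \<in> moduli_points fin g n a"
proof -
  define Z where "Z = {e\<in>edges G. l e = 0}"
  have "stable_graph g n a (contract G Z)" using contract_stable[OF st] unfolding Z_def by auto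
  moreover have "\<forall>e\<in>edges (contract G Z). 0 < l e \<and> (fin \<longrightarrow> l e < \<infinity>)"
    using l unfolding cone_set_def Z_def by (auto simp: order_le_less)
  ultimately have "stable_curve fin g n a (contract G Z, l)" unfolding stable_curve_def by simp
  then show ?thesis unfolding moduli_points_def cone_map_def Z_def by blast
qed

lemma topspace_cone[simp]: "topspace (cone_top fin E) = cone_set fin E"
  unfolding cone_top_def by simp

lemma openin_moduli:
  "openin (moduli_top fin g n a) U \<longleftrightarrow>
     final_open (moduli_points fin g n a) (\<lambda>G. cone_top fin (edges G)) (cone_map n) {G. stable_graph g n a G} U"
  unfolding moduli_top_def final_topology_def by (simp only: topology_inverse'[OF istopology_final_open])

lemma topspace_moduli: "topspace (moduli_top fin g n a) = moduli_points fin g n a"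
proof
  show "topspace (moduli_top fin g n a) \<subseteq> moduli_points fin g n a"
    using openin_moduli[of fin g n a "topspace (moduli_top fin g n a)"] unfolding final_open_def by simp
  have "openin (moduli_top fin g n a) (moduli_points fin g n a)"
    unfolding openin_moduli final_open_def
  proof (intro conjI ballI order_refl)
    fix G assume "G \<in> {G. stable_graph g n a G}"
    then have "{l \<in> topspace (cone_top fin (edges G)). cone_map n G l \<in> moduli_points fin g n a} = topspace (cone_top fin (edges G))"
      using cone_map_in by auto
    then show "openin (cone_top fin (edges G)) {l \<in> topspace (cone_top fin (edges G)). cone_map n G l \<in> moduli_points fin g n a}"
      using openin_topspace[of "cone_top fin (edges G)"] by (simp del: topspace_cone)
  qed
  then show "moduli_points fin g n a \<subseteq> topspace (moduli_top fin g n a)" by (rule openin_subset)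
qed

lemma closedin_moduli:
  "closedin (moduli_top fin g n a) C \<longleftrightarrow> C \<subseteq> moduli_points fin g n a \<and>
     (\<forall>G. stable_graph g n a G \<longrightarrow> closedin (cone_top fin (edges G)) {l\<in>cone_set fin (edges G). cone_map n G l \<in> C})"
proof -
  have eq: "{l \<in> cone_set fin (edges G). cone_map n G l \<in> moduli_points fin g n a - C}
      = cone_set fin (edges G) - {l\<in>cone_set fin (edges G). cone_map n G l \<in> C}" if "stable_graph g n a G" for G
    using cone_map_in[OF that] by auto
  show ?thesis
    unfolding closedin_def[of "moduli_top fin g n a"] topspace_moduli openin_moduli final_open_def
    using eq by (auto simp: closedin_def)
qed

lemma contract_legv: "contract (G\<lparr>legv := x\<rparr>) S = (contract G S)\<lparr>legv := vrep G S \<circ> x\<rparr>"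
  unfolding contract_def vrep_def vclass_def adj_def by (simp add: o_def)

lemma cone_map_relabel:
  assumes w: "wfl n G" and r: "\<forall>i\<in>{1..n}. \<rho> i \<in> {1..n}"
  shows "relabel_map n \<rho> (cone_map n G l) = cone_map n (G\<lparr>legv := legv G \<circ> \<rho>\<rparr>) l"
proof -
  define Z where "Z = {e\<in>edges G. l e = 0}"
  have "relabel_map n \<rho> (cone_map n G l) = iso_class n (relabel \<rho> (contract G Z, l))"
    unfolding cone_map_def Z_def[symmetric] using relabel_map_iso[OF _ r] wfl_contract[OF w] by simp
  also have "\<dots> = cone_map n (G\<lparr>legv := legv G \<circ> \<rho>\<rparr>) l"
    unfolding cone_map_def relabel_pair contract_legv Z_def by (simp add: o_def)
  finally show ?thesis .
qed

lemma cone_map_comp: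
  assumes w: "wfl n G" and Z: "Z \<subseteq> edges G" and l: "l \<in> cone_set fin (edges G - Z)"
  shows "cone_map n (contract G Z) l = cone_map n G l"
proof -
  define Y where "Y = {e\<in>edges G. l e = 0}"
  have ZY: "Z \<subseteq> Y" using l Z unfolding Y_def cone_set_def by auto
  have YE: "Y \<subseteq> edges G" unfolding Y_def by auto
  have "{e\<in>edges (contract G Z). l e = 0} = Y - Z" unfolding Y_def by auto
  then have "cone_map n (contract G Z) l = iso_class n (contract (contract G Z) (Y - Z), l)"
    unfolding cone_map_def by simp
  also have "\<dots> = iso_class n (contract G Y, l)"
    using iso_class_eq[OF contract_comp_iso[OF w ZY YE, of l]] wfl_contract[OF w] by simp
  also have "\<dots> = cone_map n G l" unfolding cone_map_def Y_def by simp
  finally show ?thesis .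
qed

lemma face_closed:
  assumes Z: "Z \<subseteq> E"
  shows "closedin (cone_top fin E) (cone_set fin (E - Z))"
proof -
  define PT where "PT = (product_topology (\<lambda>_. euclidean) UNIV :: (nat \<Rightarrow> ereal) topology)"
  have c1: "closedin PT {l. l e = 0}" for e
  proof -
    have "closedin PT {l \<in> topspace PT. l e \<in> {0}}"
      unfolding PT_def by (rule closedin_continuous_map_preimage[OF continuous_map_product_projection]) auto
    then show ?thesis unfolding PT_def by simp
  qed
  have c2: "closedin PT {l. \<forall>e\<in>Z. l e = 0}"
  proof (cases "Z = {}")
    case True
    then show ?thesis unfolding PT_def by (simp add: closedin_topspace[of "product_topology (\<lambda>_. euclidean) UNIV", simplified])
  next
    case False
    have eqZ: "{l. \<forall>e\<in>Z. l e = 0} = \<Inter> ((\<lambda>e. {l. l e = 0}) ` Z)" by auto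
    have "closedin PT (\<Inter> ((\<lambda>e. {l. l e = 0}) ` Z))"
      using False c1 by (intro closedin_Inter) auto
    then show ?thesis by (subst eqZ)
  qed
  have "cone_set fin (E - Z) = cone_set fin E \<inter> {l. \<forall>e\<in>Z. l e = 0}"
    using Z unfolding cone_set_def by auto
  then show ?thesis unfolding cone_top_def PT_def[symmetric]
    using closedin_subtopology_Int_closed[OF c2] by simp
qed

lemma face_subtop:
  assumes Z: "Z \<subseteq> E"
  shows "cone_top fin (E - Z) = subtopology (cone_top fin E) (cone_set fin (E - Z))"
proof -
  have "cone_set fin E \<inter> cone_set fin (E - Z) = cone_set fin (E - Z)"
    using Z unfolding cone_set_def by auto
  then show ?thesis unfolding cone_top_def subtopology_subtopology by simp
qed

lemma preimage_closed:
  assumes w: "wfl n G" and C: "closedin (moduli_top fin g n a) C"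
  shows "closedin (cone_top fin (edges G)) {l\<in>cone_set fin (edges G). cone_map n G l \<in> C}"
proof -
  define E where "E = edges G"
  have CP: "C \<subseteq> moduli_points fin g n a"
    and Ccl: "\<And>H. stable_graph g n a H \<Longrightarrow> closedin (cone_top fin (edges H)) {l\<in>cone_set fin (edges H). cone_map n H l \<in> C}"
    using C unfolding closedin_moduli by auto
  define ZZ where "ZZ = {Z. Z \<subseteq> E \<and> stable_graph g n a (contract G Z)}"
  define A where "A Z = {l\<in>cone_set fin (E - Z). cone_map n (contract G Z) l \<in> C}" for Z
  have finE: "finite E" using w unfolding wfl_def wfg_def E_def by blast
  have finZZ: "finite ZZ" unfolding ZZ_def using finE by (rule finite_subset[rotated, OF finite_Pow_iff[THEN iffD2]]) auto
  have eq: "{l\<in>cone_set fin E. cone_map n G l \<in> C} = \<Union> (A ` ZZ)"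
  proof
    show "{l\<in>cone_set fin E. cone_map n G l \<in> C} \<subseteq> \<Union> (A ` ZZ)"
    proof
      fix l assume l: "l \<in> {l\<in>cone_set fin E. cone_map n G l \<in> C}"
      define Y where "Y = {e\<in>E. l e = 0}"
      have YE: "Y \<subseteq> E" unfolding Y_def by auto
      have "cone_map n G l \<in> moduli_points fin g n a" using l CP by blast
      then obtain D where D: "stable_curve fin g n a D" "cone_map n G l = iso_class n D"
        unfolding moduli_points_def by blast
      have "iso_class n (contract G Y, l) = iso_class n D" using D(2) unfolding cone_map_def Y_def E_def .
      then have "curve_iso n (contract G Y, l) D" by (rule iso_class_eqD)
      then have "curve_iso n D (contract G Y, l)" using iso_sym wfl_contract[OF w] by simp
      moreover have "stable_graph g n a (fst D)" using D(1) unfolding stable_curve_def by blast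
      ultimately have stY: "stable_graph g n a (contract G Y)" using iso_stable[of n "fst D" "snd D"] by simp
      have lY: "l \<in> cone_set fin (E - Y)" using l unfolding cone_set_def Y_def by auto
      have "cone_map n (contract G Y) l = cone_map n G l"
        using cone_map_comp[OF w YE[unfolded E_def] lY[unfolded E_def]] .
      then have "l \<in> A Y" using l lY unfolding A_def by simp
      moreover have "Y \<in> ZZ" unfolding ZZ_def using YE stY by blast
      ultimately show "l \<in> \<Union> (A ` ZZ)" by blast
    qed
    show "\<Union> (A ` ZZ) \<subseteq> {l\<in>cone_set fin E. cone_map n G l \<in> C}"
    proof
      fix l assume "l \<in> \<Union> (A ` ZZ)"
      then obtain Z where Z: "Z \<in> ZZ" "l \<in> A Z" by blast
      have ZE: "Z \<subseteq> E" using Z unfolding ZZ_def by blast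
      have lZ: "l \<in> cone_set fin (E - Z)" using Z unfolding A_def by blast
      then have "l \<in> cone_set fin E" unfolding cone_set_def by auto
      moreover have "cone_map n (contract G Z) l = cone_map n G l"
        using cone_map_comp[OF w ZE[unfolded E_def] lZ[unfolded E_def]] .
      ultimately show "l \<in> {l\<in>cone_set fin E. cone_map n G l \<in> C}" using Z unfolding A_def by simp
    qed
  qed
  have "closedin (cone_top fin E) (A Z)" if Z: "Z \<in> ZZ" for Z
  proof -
    have ZE: "Z \<subseteq> E" and st: "stable_graph g n a (contract G Z)" using Z unfolding ZZ_def by auto
    have "closedin (cone_top fin (E - Z)) (A Z)"
      using Ccl[OF st] unfolding A_def E_def by simp
    then have "closedin (subtopology (cone_top fin E) (cone_set fin (E - Z))) (A Z)"
      using face_subtop[OF ZE] by simp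
    then show ?thesis using face_closed[OF ZE] closedin_trans_full by blast
  qed
  then have "closedin (cone_top fin E) (\<Union> (A ` ZZ))"
    using finZZ by (intro closedin_Union) auto
  then show ?thesis using eq unfolding E_def by simp
qed



lemma moduli_embedding:
  assumes wa: "weight_datum g n a" and wb: "weight_datum g n b"
    and ps: "\<sigma> permutes {1..n}" and pt: "\<tau> permutes {1..n}"
    and ch: "chamber_le g n (a \<circ> \<sigma>) (b \<circ> \<tau>)"
  shows "embedding_map (moduli_top fin g n a) (moduli_top fin g n b) (relabel_map n (\<sigma> \<circ> inv \<tau>))"
proof -
  define \<rho> where "\<rho> = \<sigma> \<circ> inv \<tau>"
  define \<phi> where "\<phi> = relabel_map n \<rho>"
  have pr: "\<rho> permutes {1..n}" unfolding \<rho>_def using permutes_compose[OF permutes_inv[OF pt] ps] .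
  have mr: "\<forall>i\<in>{1..n}. \<rho> i \<in> {1..n}" using permutes_maps[OF pr] .
  have mir: "\<forall>i\<in>{1..n}. inv \<rho> i \<in> {1..n}" using permutes_maps[OF permutes_inv[OF pr]] .
  have rst: "stable_graph g n b (G\<lparr>legv := legv G \<circ> \<rho>\<rparr>)" if "stable_graph g n a G" for G
    unfolding \<rho>_def using relabel_stable[OF wa wb ps pt ch that] .
  have phi_iso: "\<phi> (iso_class n C) = iso_class n (relabel \<rho> C)" if "wfl n (fst C)" for C
    unfolding \<phi>_def using relabel_map_iso[OF that mr] .
  have phiP: "\<phi> c \<in> moduli_points fin g n b" if c: "c \<in> moduli_points fin g n a" for c
  proof -
    obtain G l where C: "stable_curve fin g n a (G, l)" "c = iso_class n (G, l)"
      using c unfolding moduli_points_def by auto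
    have st: "stable_graph g n a G" using C(1) unfolding stable_curve_def by simp
    have "\<phi> c = iso_class n (G\<lparr>legv := legv G \<circ> \<rho>\<rparr>, l)"
      using phi_iso[of "(G, l)"] stable_wfl[OF st] C(2) by (simp add: relabel_pair)
    moreover have "stable_curve fin g n b (G\<lparr>legv := legv G \<circ> \<rho>\<rparr>, l)"
      using C(1) rst[OF st] unfolding stable_curve_def by simp
    ultimately show ?thesis unfolding moduli_points_def by blast
  qed
  have phi_inj: "c1 = c2" if c1: "c1 \<in> moduli_points fin g n a" and c2: "c2 \<in> moduli_points fin g n a"
    and eq: "\<phi> c1 = \<phi> c2" for c1 c2
  proof -
    obtain C1 where C1: "stable_curve fin g n a C1" "c1 = iso_class n C1" using c1 unfolding moduli_points_def by auto
    obtain C2 where C2: "stable_curve fin g n a C2" "c2 = iso_class n C2" using c2 unfolding moduli_points_def by auto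
    have w1: "wfl n (fst C1)" "wfl n (fst C2)" using C1 C2 stable_wfl unfolding stable_curve_def by auto
    have "iso_class n (relabel \<rho> C1) = iso_class n (relabel \<rho> C2)"
      using eq phi_iso[OF w1(1)] phi_iso[OF w1(2)] C1 C2 by simp
    then show ?thesis using relabel_inj[OF pr w1(1)] C1 C2 by simp
  qed
  have phi_inj2: "x \<in> C" if C: "C \<subseteq> moduli_points fin g n a" and xw: "x = iso_class n X" "wfl n (fst X)"
    and ex: "\<phi> x \<in> \<phi> ` C" for C x X
  proof -
    obtain c where c: "c \<in> C" "\<phi> x = \<phi> c" using ex by blast
    obtain D where D: "stable_curve fin g n a D" "c = iso_class n D" using c C unfolding moduli_points_def by blast
    have wD: "wfl n (fst D)" using D stable_wfl unfolding stable_curve_def by auto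
    have "iso_class n (relabel \<rho> X) = iso_class n (relabel \<rho> D)"
      using c(2) phi_iso[OF xw(2)] phi_iso[OF wD] xw(1) D(2) by simp
    then have "x = c" using relabel_inj[OF pr xw(2)] xw(1) D(2) by simp
    then show ?thesis using c by simp
  qed
  have cont: "continuous_map (moduli_top fin g n a) (moduli_top fin g n b) \<phi>"
    unfolding continuous_map_def
  proof (intro conjI allI impI)
    show "\<phi> \<in> topspace (moduli_top fin g n a) \<rightarrow> topspace (moduli_top fin g n b)"
      unfolding topspace_moduli using phiP by blast
  next
    fix U assume U: "openin (moduli_top fin g n b) U"
    have Uo: "openin (cone_top fin (edges H)) {l \<in> cone_set fin (edges H). cone_map n H l \<in> U}"
      if "stable_graph g n b H" for H
      using U that unfolding openin_moduli final_open_def by simp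
    show "openin (moduli_top fin g n a) {x \<in> topspace (moduli_top fin g n a). \<phi> x \<in> U}"
      unfolding openin_moduli final_open_def topspace_moduli
    proof (intro conjI ballI)
      show "{x \<in> moduli_points fin g n a. \<phi> x \<in> U} \<subseteq> moduli_points fin g n a" by blast
    next
      fix G assume "G \<in> {G. stable_graph g n a G}"
      then have st: "stable_graph g n a G" by simp
      have "{l \<in> topspace (cone_top fin (edges G)). cone_map n G l \<in> {x \<in> moduli_points fin g n a. \<phi> x \<in> U}}
          = {l \<in> cone_set fin (edges (G\<lparr>legv := legv G \<circ> \<rho>\<rparr>)). cone_map n (G\<lparr>legv := legv G \<circ> \<rho>\<rparr>) l \<in> U}"
        using cone_map_in[OF st] cone_map_relabel[OF stable_wfl[OF st] mr] unfolding \<phi>_def by auto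
      then show "openin (cone_top fin (edges G))
          {l \<in> topspace (cone_top fin (edges G)). cone_map n G l \<in> {x \<in> moduli_points fin g n a. \<phi> x \<in> U}}"
        using Uo[OF rst[OF st]] by simp
    qed
  qed
  have clo: "closed_map (moduli_top fin g n a) (moduli_top fin g n b) \<phi>"
    unfolding closed_map_def
  proof (intro allI impI)
    fix C assume C: "closedin (moduli_top fin g n a) C"
    have CP: "C \<subseteq> moduli_points fin g n a" using C unfolding closedin_moduli by blast
    show "closedin (moduli_top fin g n b) (\<phi> ` C)"
      unfolding closedin_moduli
    proof (intro conjI allI impI)
      show "\<phi> ` C \<subseteq> moduli_points fin g n b" using CP phiP by blast
    next
      fix H assume stH: "stable_graph g n b H"
      define H' where "H' = H\<lparr>legv := legv H \<circ> inv \<rho>\<rparr>"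
      have wH': "wfl n H'" unfolding H'_def using wfl_relabel[OF stable_wfl[OF stH] mir] .
      have HH: "H'\<lparr>legv := legv H' \<circ> \<rho>\<rparr> = H"
        unfolding H'_def using permutes_inv_o(2)[OF pr] by (simp add: o_assoc[symmetric])
      have eH: "edges H' = edges H" unfolding H'_def by simp
      have "{l \<in> cone_set fin (edges H). cone_map n H l \<in> \<phi> ` C} = {l \<in> cone_set fin (edges H'). cone_map n H' l \<in> C}"
      proof (rule Collect_cong)
        fix l
        have cm: "cone_map n H l = \<phi> (cone_map n H' l)"
          unfolding \<phi>_def using cone_map_relabel[OF wH' mr, of l] HH by simp
        have "cone_map n H' l \<in> C \<longleftrightarrow> \<phi> (cone_map n H' l) \<in> \<phi> ` C"
        proof
          assume "\<phi> (cone_map n H' l) \<in> \<phi> ` C"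
          then show "cone_map n H' l \<in> C"
            using phi_inj2[OF CP, of "cone_map n H' l" "(contract H' {e\<in>edges H'. l e = 0}, l)"]
              wfl_contract[OF wH'] unfolding cone_map_def by simp
        qed blast
        then show "(l \<in> cone_set fin (edges H) \<and> cone_map n H l \<in> \<phi> ` C) =
                   (l \<in> cone_set fin (edges H') \<and> cone_map n H' l \<in> C)" using cm eH by simp
      qed
      then show "closedin (cone_top fin (edges H)) {l \<in> cone_set fin (edges H). cone_map n H l \<in> \<phi> ` C}"
        using preimage_closed[OF wH' C] eH by simp
    qed
  qed
  have inj: "inj_on \<phi> (topspace (moduli_top fin g n a))"
    unfolding topspace_moduli using phi_inj by (intro inj_onI) blast
  show ?thesis using injective_closed_imp_embedding_map[OF cont clo inj] unfolding \<phi>_def \<rho>_def .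
qed

lemma embedding_sub:
  assumes e: "embedding_map X Y f" and sub: "f ` (topspace X \<inter> S) \<subseteq> T"
  shows "embedding_map (subtopology X S) (subtopology Y T) f"
proof -
  have "embedding_map (subtopology X S) X id"
    unfolding embedding_map_def by (simp add: subtopology_restrict)
  then have "embedding_map (subtopology X S) Y (f \<circ> id)" using embedding_map_compose e by blast
  then show ?thesis using sub by (simp add: embedding_map_in_subtopology)
qed



lemma delta_maps:
  assumes wa: "weight_datum g n a" and wb: "weight_datum g n b"
    and ps: "\<sigma> permutes {1..n}" and pt: "\<tau> permutes {1..n}"
    and ch: "chamber_le g n (a \<circ> \<sigma>) (b \<circ> \<tau>)"
  shows "relabel_map n (\<sigma> \<circ> inv \<tau>) ` (topspace (Mtrop g n a) \<inter>
           {c \<in> moduli_points True g n a. \<exists>C\<in>c. total_length C = 1})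
         \<subseteq> {c \<in> moduli_points True g n b. \<exists>C\<in>c. total_length C = 1}"
proof
  define \<rho> where "\<rho> = \<sigma> \<circ> inv \<tau>"
  have pr: "\<rho> permutes {1..n}" unfolding \<rho>_def using permutes_compose[OF permutes_inv[OF pt] ps] .
  have mr: "\<forall>i\<in>{1..n}. \<rho> i \<in> {1..n}" using permutes_maps[OF pr] .
  fix d assume "d \<in> relabel_map n (\<sigma> \<circ> inv \<tau>) ` (topspace (Mtrop g n a) \<inter>
           {c \<in> moduli_points True g n a. \<exists>C\<in>c. total_length C = 1})"
  then obtain c C where c: "c \<in> moduli_points True g n a" "C \<in> c" "total_length C = 1"
    and d: "d = relabel_map n \<rho> c" unfolding \<rho>_def by blast
  obtain G l where G: "stable_curve True g n a (G, l)" "c = iso_class n (G, l)"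
    using c(1) unfolding moduli_points_def by auto
  have st: "stable_graph g n a G" using G(1) unfolding stable_curve_def by simp
  have iso: "curve_iso n (G, l) C" using c(2) G(2) unfolding iso_class_def by simp
  then have stC: "stable_graph g n a (fst C)" using iso_stable[of n G l "fst C" "snd C"] st by simp
  have "c = iso_class n C" using iso_class_eq[OF iso] stable_wfl[OF st] G(2) by simp
  then have dC: "d = iso_class n (relabel \<rho> C)" using d relabel_map_iso[OF stable_wfl[OF stC] mr] by simp
  have "d \<in> moduli_points True g n b"
  proof -
    have "d = iso_class n (G\<lparr>legv := legv G \<circ> \<rho>\<rparr>, l)"
      using d G(2) relabel_map_iso[OF _ mr, of "(G, l)"] stable_wfl[OF st] by (simp add: relabel_pair)
    moreover have "stable_curve True g n b (G\<lparr>legv := legv G \<circ> \<rho>\<rparr>, l)"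
      using G(1) relabel_stable[OF wa wb ps pt ch st] unfolding stable_curve_def \<rho>_def by simp
    ultimately show ?thesis unfolding moduli_points_def by blast
  qed
  moreover have "relabel \<rho> C \<in> d" using dC iso_class_mem by simp
  moreover have "total_length (relabel \<rho> C) = 1" using c(3) unfolding total_length_def relabel_def by simp
  ultimately show "d \<in> {c \<in> moduli_points True g n b. \<exists>C\<in>c. total_length C = 1}" by blast
qed

theorem mainTheorem1:
  fixes g n N :: nat and As :: "nat \<Rightarrow> nat \<Rightarrow> real"
  assumes "n \<ge> 1" and "N \<ge> 1"
    and "\<forall>p\<in>{1..N}. weight_datum g n (As p) \<and> in_chamber g n (As p)"
    and "\<forall>p\<in>{1..<N}. sym_chamber_le g n (As p) (As (Suc p))"
  shows "\<forall>p\<in>{1..<N}. \<exists>\<rho>. \<rho> permutes {1..n} \<and>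
           embedding_map (Mtrop g n (As p)) (Mtrop g n (As (Suc p))) (relabel_map n \<rho>) \<and>
           embedding_map (Mtrop_bar g n (As p)) (Mtrop_bar g n (As (Suc p))) (relabel_map n \<rho>) \<and>
           embedding_map (Delta_trop g n (As p)) (Delta_trop g n (As (Suc p))) (relabel_map n \<rho>)"
proof
  fix p assume p: "p \<in> {1..<N}"
  have wa: "weight_datum g n (As p)" and wb: "weight_datum g n (As (Suc p))"
    using assms(3) p by auto
  obtain \<sigma> \<tau> where ps: "\<sigma> permutes {1..n}" and pt: "\<tau> permutes {1..n}"
    and ch: "chamber_le g n (As p \<circ> \<sigma>) (As (Suc p) \<circ> \<tau>)"
    using assms(4) p unfolding sym_chamber_le_def by blast
  have pr: "(\<sigma> \<circ> inv \<tau>) permutes {1..n}" using permutes_compose[OF permutes_inv[OF pt] ps] .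
  have e1: "embedding_map (Mtrop g n (As p)) (Mtrop g n (As (Suc p))) (relabel_map n (\<sigma> \<circ> inv \<tau>))"
    unfolding Mtrop_def by (rule moduli_embedding[OF wa wb ps pt ch])
  have e2: "embedding_map (Mtrop_bar g n (As p)) (Mtrop_bar g n (As (Suc p))) (relabel_map n (\<sigma> \<circ> inv \<tau>))"
    unfolding Mtrop_bar_def by (rule moduli_embedding[OF wa wb ps pt ch])
  have e3: "embedding_map (Delta_trop g n (As p)) (Delta_trop g n (As (Suc p))) (relabel_map n (\<sigma> \<circ> inv \<tau>))"
    unfolding Delta_trop_def by (rule embedding_sub[OF e1 delta_maps[OF wa wb ps pt ch]])
  show "\<exists>\<rho>. \<rho> permutes {1..n} \<and>
           embedding_map (Mtrop g n (As p)) (Mtrop g n (As (Suc p))) (relabel_map n \<rho>) \<and>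
           embedding_map (Mtrop_bar g n (As p)) (Mtrop_bar g n (As (Suc p))) (relabel_map n \<rho>) \<and>
           embedding_map (Delta_trop g n (As p)) (Delta_trop g n (As (Suc p))) (relabel_map n \<rho>)"
    using pr e1 e2 e3 by blast
qed

end
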